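(* Assume $\mathcal E$ is stable under pullback. Let $c$ be a closure operator on $\mathcal A$ and let $X\in\mathcal X$ be $c^\rho$-compact. Factor $\rho_X=\rho_X^{\mathcal M}\rho_X^{\mathcal E}$ with $\rho_X^{\mathcal E}\in\mathcal E$, $\rho_X^{\mathcal M}\in\mathcal M$, and let $R^{\mathcal E}X$ denote the codomain of $\rho_X^{\mathcal E}$. Then: (a) $R^{\mathcal E}X$ is $c^\rho$-compact; (b) if $RX$ is $c$-separated, then $\rho_X\in\mathcal E$ and $RX$ is $c$-compact.
   Context: Standing setting. $\mathcal X$ and $\mathcal A$ are finitely complete categories; $\mathcal X$ carries a proper factorization system $(\mathcal E,\mathcal M)$ and $\mathcal A$ a proper factorization system $(\mathcal F,\mathcal N)$ (proper: every member of $\mathcal E$, resp. $\mathcal F$, is an epimorphism and every member of $\mathcal M$, resp. $\mathcal N$, is a monomorphism). $\mathcal A$ is a full reflective subcategory of $\mathcal X$ with reflector $R:\mathcal X\to\mathcal A$ and reflection (unit) $\rho_X:X\to RX$; as in the paper's setting, $\mathcal N\subseteq\mathcal M$ and $R\mathcal E\subseteq\mathcal F$. For $X\in\mathcal X$, $\operatorname{sub}X$ is the class $\mathcal M/X$ of $\mathcal M$-morphisms with codomain $X$, preordered by $m\le n$ iff $m=nj$ for some morphism $j$; for $A\in\mathcal A$, $\operatorname{sub}_{\mathcal A}A=\mathcal N/A$ with the same preorder. For $f:X\to Y$ and $m\in\operatorname{sub}X$, the image $f(m)\in\operatorname{sub}Y$ is the $\mathcal M$-part of the $(\mathcal E,\mathcal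 M)$-factorization of $fm$, and for $n\in\operatorname{sub}Y$ the preimage $f^{-1}(n)\in\operatorname{sub}X$ is the pullback of $n$ along $f$ (analogously in $\mathcal A$ using $(\mathcal F,\mathcal N)$). A closure operator $c$ on $\mathcal A$ (with respect to $\mathcal N$) is a family of maps $c_A:\operatorname{sub}_{\mathcal A}A\to\operatorname{sub}_{\mathcal A}A$ ($A\in\mathcal A$) such that $m\le c_A(m)$, $m\le n\Rightarrow c_A(m)\le c_A(n)$, and $f(c_A(m))\le c_B(f(m))$ for every morphism $f:A\to B$ of $\mathcal A$; closure operators on $\mathcal X$ (with respect to $\mathcal M$) are defined likewise. For an arbitrary morphism $g:M\to A$ of $\mathcal A$, write $g(1_M)$ for the $\mathcal N$-part of its $(\mathcal F,\mathcal N)$-factorization and put $c_A(g):=c_A(g(1_M))$. The $R$-initial lift of $c$ is the closure operator $c^\rho$ on $\mathcal X$ given by $c^\rho_X(m)=\rho_X^{-1}(c_{RX}(Rm))$ for $X\in\mathcal X$, $m\in\operatorname{sub}X$. A subobject $m$ is $c$-closed if $c(m)=m$; an object $A$ is $c$-separated if its diagonal $\delta_A:A\to A\times A$ is $c$-closed. For a closure operator $d$ on a category, an object $X$ is $d$-compact if for every object $Y$ the projection $\pi_Y:X\times Y\to Y$ is $d$-preserving, i.e. $\pi_Y(d_{X\times Y}(m))=d_Y(\pi_Y(m))$ for every subobject $m$ of $X\times Y$ (for $c$-compactness of an object of $\mathcal A$, $Y$ ranges over $\mathcal A$ and subobjects over $\operatorname{sub}_{\mathcal A}$; for $c^\rho$-compactness,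 over $\mathcal X$ and $\operatorname{sub}$). *)

theory Defs
  imports Main
begin

record ('o, 'm) cat =
  ob  :: "'o set"
  ar  :: "'m set"
  dm  :: "'m \<Rightarrow> 'o"
  cd  :: "'m \<Rightarrow> 'o"
  cp  :: "'m \<Rightarrow> 'm \<Rightarrow> 'm"   (* cp C g f = g \<circ> f *)
  idm :: "'o \<Rightarrow> 'm"

definition is_cat :: "('o, 'm) cat \<Rightarrow> bool" where
  "is_cat C \<equiv>
     (\<forall>f\<in>ar C. dm C f \<in> ob C \<and> cd C f \<in> ob C) \<and>
     (\<forall>a\<in>ob C. idm C a \<in> ar C \<and> dm C (idm C a) = a \<and> cd C (idm C a) = a) \<and>
     (\<forall>f\<in>ar C. \<forall>g\<in>ar C. cd C f = dm C g \<longrightarrow>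
         cp C g f \<in> ar C \<and> dm C (cp C g f) = dm C f \<and> cd C (cp C g f) = cd C g) \<and>
     (\<forall>f\<in>ar C. cp C f (idm C (dm C f)) = f \<and> cp C (idm C (cd C f)) f = f) \<and>
     (\<forall>f\<in>ar C. \<forall>g\<in>ar C. \<forall>h\<in>ar C. cd C f = dm C g \<longrightarrow> cd C g = dm C h \<longrightarrow>
         cp C h (cp C g f) = cp C (cp C h g) f)"

definition hom :: "('o, 'm) cat \<Rightarrow> 'o \<Rightarrow> 'o \<Rightarrow> 'm set" where
  "hom C a b = {f \<in> ar C. dm C f = a \<and> cd C f = b}"

definition mono :: "('o, 'm) cat \<Rightarrow> 'm \<Rightarrow> bool" where
  "mono C m \<equiv> m \<in> ar C \<and>
     (\<forall>f g. f \<in> ar C \<longrightarrow> g \<in> ar C \<longrightarrow> cd C f = dm C m \<longrightarrow> cd C g = dm C m \<longrightarrow>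
            dm C f = dm C g \<longrightarrow> cp C m f = cp C m g \<longrightarrow> f = g)"

definition epi :: "('o, 'm) cat \<Rightarrow> 'm \<Rightarrow> bool" where
  "epi C e \<equiv> e \<in> ar C \<and>
     (\<forall>f g. f \<in> ar C \<longrightarrow> g \<in> ar C \<longrightarrow> dm C f = cd C e \<longrightarrow> dm C g = cd C e \<longrightarrow>
            cd C f = cd C g \<longrightarrow> cp C f e = cp C g e \<longrightarrow> f = g)"

definition iso :: "('o, 'm) cat \<Rightarrow> 'm \<Rightarrow> bool" where
  "iso C f \<equiv> f \<in> ar C \<and> (\<exists>g\<in>ar C. dm C g = cd C f \<and> cd C g = dm C f \<and>
      cp C g f = idm C (dm C f) \<and> cp C f g = idm C (cd C f))"

text \<open>Pullback square: f : a -> z, g : b -> z, p : P -> a, q : P -> b, f p = g q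
  (so p is the pullback of g along f, and q the pullback of f along g).\<close>
definition is_pullback :: "('o, 'm) cat \<Rightarrow> 'm \<Rightarrow> 'm \<Rightarrow> 'm \<Rightarrow> 'm \<Rightarrow> bool" where
  "is_pullback C f g p q \<equiv>
     f \<in> ar C \<and> g \<in> ar C \<and> p \<in> ar C \<and> q \<in> ar C \<and>
     cd C f = cd C g \<and> cd C p = dm C f \<and> cd C q = dm C g \<and> dm C p = dm C q \<and>
     cp C f p = cp C g q \<and>
     (\<forall>u v. u \<in> ar C \<longrightarrow> v \<in> ar C \<longrightarrow> cd C u = dm C f \<longrightarrow> cd C v = dm C g \<longrightarrow>
        dm C u = dm C v \<longrightarrow> cp C f u = cp C g v \<longrightarrow>
        (\<exists>!h. h \<in> ar C \<and> dm C h = dm C u \<and> cd C h = dm C p \<and> cp C p h = u \<and> cp C q h = v))"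

definition is_terminal :: "('o, 'm) cat \<Rightarrow> 'o \<Rightarrow> bool" where
  "is_terminal C t \<equiv> t \<in> ob C \<and> (\<forall>a\<in>ob C. \<exists>!f. f \<in> hom C a t)"

definition finitely_complete :: "('o, 'm) cat \<Rightarrow> bool" where
  "finitely_complete C \<equiv> (\<exists>t. is_terminal C t) \<and>
     (\<forall>f\<in>ar C. \<forall>g\<in>ar C. cd C f = cd C g \<longrightarrow> (\<exists>p q. is_pullback C f g p q))"

definition is_product :: "('o, 'm) cat \<Rightarrow> 'o \<Rightarrow> 'o \<Rightarrow> 'm \<Rightarrow> 'm \<Rightarrow> bool" where
  "is_product C a b p1 p2 \<equiv>
     p1 \<in> ar C \<and> p2 \<in> ar C \<and> dm C p1 = dm C p2 \<and> cd C p1 = a \<and> cd C p2 = b \<and>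
     (\<forall>u v. u \<in> ar C \<longrightarrow> v \<in> ar C \<longrightarrow> dm C u = dm C v \<longrightarrow> cd C u = a \<longrightarrow> cd C v = b \<longrightarrow>
        (\<exists>!h. h \<in> ar C \<and> dm C h = dm C u \<and> cd C h = dm C p1 \<and> cp C p1 h = u \<and> cp C p2 h = v))"

definition factorization_system :: "('o, 'm) cat \<Rightarrow> 'm set \<Rightarrow> 'm set \<Rightarrow> bool" where
  "factorization_system C E M \<equiv>
     E \<subseteq> ar C \<and> M \<subseteq> ar C \<and> {f. iso C f} \<subseteq> E \<inter> M \<and>
     (\<forall>f\<in>E. \<forall>g\<in>E. cd C f = dm C g \<longrightarrow> cp C g f \<in> E) \<and>
     (\<forall>f\<in>M. \<forall>g\<in>M. cd C f = dm C g \<longrightarrow> cp C g f \<in> M) \<and>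
     (\<forall>f\<in>ar C. \<exists>e\<in>E. \<exists>m\<in>M. cd C e = dm C m \<and> f = cp C m e) \<and>
     (\<forall>e\<in>E. \<forall>m\<in>M. \<forall>u v. u \<in> ar C \<longrightarrow> v \<in> ar C \<longrightarrow>
        dm C u = dm C e \<longrightarrow> cd C u = dm C m \<longrightarrow> dm C v = cd C e \<longrightarrow> cd C v = cd C m \<longrightarrow>
        cp C v e = cp C m u \<longrightarrow>
        (\<exists>!d. d \<in> ar C \<and> dm C d = cd C e \<and> cd C d = dm C m \<and> cp C d e = u \<and> cp C m d = v))"

definition proper_fs :: "('o, 'm) cat \<Rightarrow> 'm set \<Rightarrow> 'm set \<Rightarrow> bool" where
  "proper_fs C E M \<equiv> factorization_system C E M \<and> (\<forall>e\<in>E. epi C e) \<and> (\<forall>m\<in>M. mono C m)"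

definition stable_under_pullback :: "('o, 'm) cat \<Rightarrow> 'm set \<Rightarrow> bool" where
  "stable_under_pullback C E \<equiv> \<forall>f g p q. is_pullback C f g p q \<longrightarrow> g \<in> E \<longrightarrow> p \<in> E"

definition sub :: "('o, 'm) cat \<Rightarrow> 'm set \<Rightarrow> 'o \<Rightarrow> 'm set" where
  "sub C M x = {m \<in> M. cd C m = x}"

definition sub_le :: "('o, 'm) cat \<Rightarrow> 'm \<Rightarrow> 'm \<Rightarrow> bool" where
  "sub_le C m n \<equiv> \<exists>j\<in>ar C. dm C j = dm C m \<and> cd C j = dm C n \<and> m = cp C n j"

definition sub_eq :: "('o, 'm) cat \<Rightarrow> 'm \<Rightarrow> 'm \<Rightarrow> bool" where
  "sub_eq C m n \<equiv> sub_le C m n \<and> sub_le C n m"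

text \<open>n is (a representative of) the image f(m): the M-part of an (E,M)-factorization of f m.\<close>
definition is_image :: "('o, 'm) cat \<Rightarrow> 'm set \<Rightarrow> 'm set \<Rightarrow> 'm \<Rightarrow> 'm \<Rightarrow> 'm \<Rightarrow> bool" where
  "is_image C E M f m n \<equiv> n \<in> M \<and> (\<exists>e\<in>E. cd C e = dm C n \<and> cp C f m = cp C n e)"

text \<open>k is (a representative of) the preimage f^{-1}(n): a pullback of n along f.\<close>
definition is_preimage :: "('o, 'm) cat \<Rightarrow> 'm \<Rightarrow> 'm \<Rightarrow> 'm \<Rightarrow> bool" where
  "is_preimage C f n k \<equiv> \<exists>q. is_pullback C f n k q"

definition closure_operator ::
  "('o, 'm) cat \<Rightarrow> 'm set \<Rightarrow> 'm set \<Rightarrow> ('o \<Rightarrow> 'm \<Rightarrow> 'm) \<Rightarrow> bool" where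
  "closure_operator C E M c \<equiv>
     \<forall>x\<in>ob C. \<forall>m\<in>sub C M x.
        c x m \<in> sub C M x \<and> sub_le C m (c x m) \<and>
        (\<forall>n\<in>sub C M x. sub_le C m n \<longrightarrow> sub_le C (c x m) (c x n)) \<and>
        (\<forall>f y n n'. f \<in> hom C x y \<longrightarrow> is_image C E M f (c x m) n \<longrightarrow> is_image C E M f m n'
            \<longrightarrow> sub_le C n (c y n'))"

definition is_closed :: "('o, 'm) cat \<Rightarrow> ('o \<Rightarrow> 'm \<Rightarrow> 'm) \<Rightarrow> 'm \<Rightarrow> bool" where
  "is_closed C c m \<equiv> sub_eq C (c (cd C m) m) m"

definition separated :: "('o, 'm) cat \<Rightarrow> ('o \<Rightarrow> 'm \<Rightarrow> 'm) \<Rightarrow> 'o \<Rightarrow> bool" where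
  "separated C c a \<equiv> \<forall>p1 p2 \<delta>. is_product C a a p1 p2 \<longrightarrow> \<delta> \<in> ar C \<longrightarrow> dm C \<delta> = a \<longrightarrow>
      cd C \<delta> = dm C p1 \<longrightarrow> cp C p1 \<delta> = idm C a \<longrightarrow> cp C p2 \<delta> = idm C a \<longrightarrow> is_closed C c \<delta>"

definition preserving ::
  "('o, 'm) cat \<Rightarrow> 'm set \<Rightarrow> 'm set \<Rightarrow> ('o \<Rightarrow> 'm \<Rightarrow> 'm) \<Rightarrow> 'm \<Rightarrow> bool" where
  "preserving C E M d f \<equiv> \<forall>m\<in>sub C M (dm C f). \<forall>n n'.
      is_image C E M f (d (dm C f) m) n \<longrightarrow> is_image C E M f m n' \<longrightarrow> sub_eq C n (d (cd C f) n')"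

definition compact ::
  "('o, 'm) cat \<Rightarrow> 'm set \<Rightarrow> 'm set \<Rightarrow> ('o \<Rightarrow> 'm \<Rightarrow> 'm) \<Rightarrow> 'o \<Rightarrow> bool" where
  "compact C E M d x \<equiv> x \<in> ob C \<and>
     (\<forall>y\<in>ob C. \<forall>p1 p2. is_product C x y p1 p2 \<longrightarrow> preserving C E M d p2)"

definition fullsub :: "('o, 'm) cat \<Rightarrow> 'o set \<Rightarrow> ('o, 'm) cat" where
  "fullsub C P = C\<lparr>ob := ob C \<inter> P, ar := {f \<in> ar C. dm C f \<in> P \<and> cd C f \<in> P}\<rparr>"

definition is_reflection :: "('o, 'm) cat \<Rightarrow> 'o set \<Rightarrow> ('o \<Rightarrow> 'o) \<Rightarrow> ('o \<Rightarrow> 'm) \<Rightarrow> bool" where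
  "is_reflection C P R \<rho> \<equiv> \<forall>x\<in>ob C. R x \<in> ob C \<inter> P \<and> \<rho> x \<in> hom C x (R x) \<and>
     (\<forall>a\<in>ob C \<inter> P. \<forall>f\<in>hom C x a. \<exists>!g. g \<in> hom C (R x) a \<and> cp C g (\<rho> x) = f)"

definition Rmor :: "('o, 'm) cat \<Rightarrow> ('o \<Rightarrow> 'o) \<Rightarrow> ('o \<Rightarrow> 'm) \<Rightarrow> 'm \<Rightarrow> 'm" where
  "Rmor C R \<rho> f = (THE g. g \<in> hom C (R (dm C f)) (R (cd C f)) \<and>
                          cp C g (\<rho> (dm C f)) = cp C (\<rho> (cd C f)) f)"

text \<open>The R-initial lift c^\<rho> of a closure operator c on A = fullsub C P (w.r.t. (F,N)):
  c^\<rho>_X(m) = \<rho>_X^{-1}(c_{RX}(Rm)), where c_{RX}(Rm) = c_{RX}(N-part of Rm).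
  Representatives are chosen; all choices agree up to isomorphism of subobjects.\<close>
definition crho ::
  "('o, 'm) cat \<Rightarrow> 'o set \<Rightarrow> 'm set \<Rightarrow> 'm set \<Rightarrow> ('o \<Rightarrow> 'o) \<Rightarrow> ('o \<Rightarrow> 'm)
     \<Rightarrow> ('o \<Rightarrow> 'm \<Rightarrow> 'm) \<Rightarrow> 'o \<Rightarrow> 'm \<Rightarrow> 'm" where
  "crho C P F N R \<rho> c x m = (SOME k. \<exists>n.
      is_image (fullsub C P) F N (Rmor C R \<rho> m) (idm C (R (dm C m))) n \<and>
      is_preimage C (\<rho> x) (c (R x) n) k)"

end

theory Submission
  imports Defs
begin

lemma fullsub_simps[simp]:
  "ob (fullsub C P) = ob C \<inter> P"
  "ar (fullsub C P) = {f \<in> ar C. dm C f \<in> P \<and> cd C f \<in> P}"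
  "dm (fullsub C P) = dm C" "cd (fullsub C P) = cd C"
  "cp (fullsub C P) = cp C" "idm (fullsub C P) = idm C"
  by (simp_all add: fullsub_def)

lemma hom_fullsub: "a \<in> P \<Longrightarrow> b \<in> P \<Longrightarrow> hom (fullsub C P) a b = hom C a b"
  by (auto simp: hom_def)

lemma is_cat_fullsub: "is_cat C \<Longrightarrow> P \<subseteq> ob C \<Longrightarrow> is_cat (fullsub C P)"
  unfolding is_cat_def by auto

locale category =
  fixes C :: "('o,'m) cat"
  assumes is_cat: "is_cat C"
begin

lemma homI: "f \<in> ar C \<Longrightarrow> dm C f = a \<Longrightarrow> cd C f = b \<Longrightarrow> f \<in> hom C a b"
  by (simp add: hom_def)

lemma homD: assumes "f \<in> hom C a b" shows "f \<in> ar C" "dm C f = a" "cd C f = b"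
  using assms by (auto simp: hom_def)

lemma hom_ob: assumes "f \<in> hom C a b" shows "a \<in> ob C" "b \<in> ob C"
  using assms is_cat by (auto simp: hom_def is_cat_def)

lemma ar_hom: "f \<in> ar C \<Longrightarrow> f \<in> hom C (dm C f) (cd C f)"
  by (simp add: hom_def)

lemma comp_hom[intro]: "f \<in> hom C a b \<Longrightarrow> g \<in> hom C b c \<Longrightarrow> cp C g f \<in> hom C a c"
  using is_cat by (auto simp: hom_def is_cat_def)

lemma id_hom[intro]: "a \<in> ob C \<Longrightarrow> idm C a \<in> hom C a a"
  using is_cat by (auto simp: hom_def is_cat_def)

lemma id_l[simp]: "f \<in> hom C a b \<Longrightarrow> cp C (idm C b) f = f"
  using is_cat by (auto simp: hom_def is_cat_def)

lemma id_r[simp]: "f \<in> hom C a b \<Longrightarrow> cp C f (idm C a) = f"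
  using is_cat by (auto simp: hom_def is_cat_def)

lemma assoc: "f \<in> hom C a b \<Longrightarrow> g \<in> hom C b c \<Longrightarrow> h \<in> hom C c d \<Longrightarrow>
   cp C h (cp C g f) = cp C (cp C h g) f"
  using is_cat unfolding hom_def is_cat_def by auto

lemma monoD: "mono C m \<Longrightarrow> m \<in> hom C b c \<Longrightarrow> u \<in> hom C a b \<Longrightarrow> v \<in> hom C a b \<Longrightarrow>
   cp C m u = cp C m v \<Longrightarrow> u = v"
  unfolding mono_def hom_def by auto

lemma epiD: "epi C e \<Longrightarrow> e \<in> hom C a b \<Longrightarrow> u \<in> hom C b c \<Longrightarrow> v \<in> hom C b c \<Longrightarrow>
   cp C u e = cp C v e \<Longrightarrow> u = v"
  unfolding epi_def hom_def by auto

lemma isoI: "f \<in> hom C a b \<Longrightarrow> g \<in> hom C b a \<Longrightarrow> cp C g f = idm C a \<Longrightarrow> cp C f g = idm C b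
   \<Longrightarrow> iso C f"
  unfolding iso_def hom_def by auto

lemma isoE: assumes "iso C f" "f \<in> hom C a b"
  obtains g where "g \<in> hom C b a" "cp C g f = idm C a" "cp C f g = idm C b"
  using assms unfolding iso_def hom_def by auto

lemma sub_leI: "j \<in> hom C a b \<Longrightarrow> m \<in> hom C a z \<Longrightarrow> n \<in> hom C b z \<Longrightarrow> m = cp C n j \<Longrightarrow> sub_le C m n"
  unfolding sub_le_def hom_def by auto

lemma sub_leE: assumes "sub_le C m n" "m \<in> hom C a z" "n \<in> hom C b z"
  obtains j where "j \<in> hom C a b" "m = cp C n j"
  using assms unfolding sub_le_def hom_def by auto

lemma pullbackD: assumes "is_pullback C f g p q"
  shows "f \<in> hom C (dm C f) (cd C f)" "g \<in> hom C (dm C g) (cd C f)"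
    "p \<in> hom C (dm C p) (dm C f)" "q \<in> hom C (dm C p) (dm C g)" "cp C f p = cp C g q"
  using assms unfolding is_pullback_def hom_def by auto

lemma pullback_univ: assumes "is_pullback C f g p q" "u \<in> hom C t (dm C f)" "v \<in> hom C t (dm C g)"
   "cp C f u = cp C g v"
  obtains h where "h \<in> hom C t (dm C p)" "cp C p h = u" "cp C q h = v"
proof -
  have U: "\<forall>u v. u \<in> ar C \<longrightarrow> v \<in> ar C \<longrightarrow> cd C u = dm C f \<longrightarrow> cd C v = dm C g \<longrightarrow>
        dm C u = dm C v \<longrightarrow> cp C f u = cp C g v \<longrightarrow>
        (\<exists>!h. h \<in> ar C \<and> dm C h = dm C u \<and> cd C h = dm C p \<and> cp C p h = u \<and> cp C q h = v)"
    using assms(1) unfolding is_pullback_def by blast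
  have "\<exists>!h. h \<in> ar C \<and> dm C h = dm C u \<and> cd C h = dm C p \<and> cp C p h = u \<and> cp C q h = v"
    apply (rule U[rule_format]) using assms(2-4) by (auto simp: hom_def)
  then show ?thesis using that assms(2) by (auto simp: hom_def)
qed

lemma pullback_uniq: assumes "is_pullback C f g p q" "h \<in> hom C t (dm C p)" "h' \<in> hom C t (dm C p)"
  "cp C p h = cp C p h'" "cp C q h = cp C q h'"
  shows "h = h'"
proof -
  note D = pullbackD[OF assms(1)]
  let ?u = "cp C p h" and ?v = "cp C q h"
  have u: "?u \<in> hom C t (dm C f)" using D(3) assms(2) by blast
  have v: "?v \<in> hom C t (dm C g)" using D(4) assms(2) by blast
  have "cp C f ?u = cp C (cp C f p) h" using assoc[OF assms(2) D(3) D(1)] .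
  also have "\<dots> = cp C (cp C g q) h" using D(5) by simp
  also have "\<dots> = cp C g ?v" using assoc[OF assms(2) D(4) D(2)] by simp
  finally have eq: "cp C f ?u = cp C g ?v" .
  have U: "\<forall>u v. u \<in> ar C \<longrightarrow> v \<in> ar C \<longrightarrow> cd C u = dm C f \<longrightarrow> cd C v = dm C g \<longrightarrow>
        dm C u = dm C v \<longrightarrow> cp C f u = cp C g v \<longrightarrow>
        (\<exists>!h. h \<in> ar C \<and> dm C h = dm C u \<and> cd C h = dm C p \<and> cp C p h = u \<and> cp C q h = v)"
    using assms(1) unfolding is_pullback_def by blast
  have "\<exists>!k. k \<in> ar C \<and> dm C k = dm C ?u \<and> cd C k = dm C p \<and> cp C p k = ?u \<and> cp C q k = ?v"
    apply (rule U[rule_format]) using u v eq by (auto simp: hom_def)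
  then obtain k where k: "\<And>y. y \<in> ar C \<and> dm C y = dm C ?u \<and> cd C y = dm C p \<and> cp C p y = ?u \<and> cp C q y = ?v \<Longrightarrow> y = k"
    by blast
  have "h = k" by (rule k) (use assms(2) u in \<open>auto simp: hom_def\<close>)
  moreover have "h' = k" by (rule k) (use assms(3-5) u in \<open>auto simp: hom_def\<close>)
  ultimately show ?thesis by simp
qed

lemma productD: assumes "is_product C a b p1 p2"
  shows "p1 \<in> hom C (dm C p1) a" "p2 \<in> hom C (dm C p1) b"
  using assms unfolding is_product_def hom_def by auto

lemma product_univ: assumes "is_product C a b p1 p2" "u \<in> hom C t a" "v \<in> hom C t b"
  obtains h where "h \<in> hom C t (dm C p1)" "cp C p1 h = u" "cp C p2 h = v"
proof -
  have U: "\<forall>u v. u \<in> ar C \<longrightarrow> v \<in> ar C \<longrightarrow> dm C u = dm C v \<longrightarrow> cd C u = a \<longrightarrow> cd C v = b \<longrightarrow>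
        (\<exists>!h. h \<in> ar C \<and> dm C h = dm C u \<and> cd C h = dm C p1 \<and> cp C p1 h = u \<and> cp C p2 h = v)"
    using assms(1) unfolding is_product_def by blast
  have "\<exists>!h. h \<in> ar C \<and> dm C h = dm C u \<and> cd C h = dm C p1 \<and> cp C p1 h = u \<and> cp C p2 h = v"
    apply (rule U[rule_format]) using assms(2-3) by (auto simp: hom_def)
  then show ?thesis using that assms(2) by (auto simp: hom_def)
qed

lemma product_uniq: assumes "is_product C a b p1 p2" "h \<in> hom C t (dm C p1)" "h' \<in> hom C t (dm C p1)"
  "cp C p1 h = cp C p1 h'" "cp C p2 h = cp C p2 h'"
  shows "h = h'"
proof -
  have X: "p1 \<in> hom C (dm C p1) a" "p2 \<in> hom C (dm C p1) b" using productD[OF assms(1)] .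
  have u: "cp C p1 h \<in> hom C t a" "cp C p2 h \<in> hom C t b" using X assms(2) by auto
  have U: "\<forall>u v. u \<in> ar C \<longrightarrow> v \<in> ar C \<longrightarrow> dm C u = dm C v \<longrightarrow> cd C u = a \<longrightarrow> cd C v = b \<longrightarrow>
        (\<exists>!h. h \<in> ar C \<and> dm C h = dm C u \<and> cd C h = dm C p1 \<and> cp C p1 h = u \<and> cp C p2 h = v)"
    using assms(1) unfolding is_product_def by blast
  have "\<exists>!k. k \<in> ar C \<and> dm C k = dm C (cp C p1 h) \<and> cd C k = dm C p1 \<and> cp C p1 k = cp C p1 h \<and> cp C p2 k = cp C p2 h"
    apply (rule U[rule_format]) using u by (auto simp: hom_def)
  then obtain k where k: "\<And>y. y \<in> ar C \<and> dm C y = dm C (cp C p1 h) \<and> cd C y = dm C p1 \<and> cp C p1 y = cp C p1 h \<and> cp C p2 y = cp C p2 h \<Longrightarrow> y = k"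
    by blast
  have d: "dm C (cp C p1 h) = t" using u by (auto simp: hom_def)
  have "h = k" by (rule k) (use assms(2) d in \<open>auto simp: hom_def\<close>)
  moreover have "h' = k" by (rule k) (use assms(3-5) d in \<open>auto simp: hom_def\<close>)
  ultimately show ?thesis by simp
qed

lemma terminal_product:
  assumes "is_terminal C t" "a \<in> ob C" "b \<in> ob C" "ta \<in> hom C a t" "tb \<in> hom C b t"
   "is_pullback C ta tb p q"
  shows "is_product C a b p q"
proof -
  have P: "p \<in> hom C (dm C p) a" "q \<in> hom C (dm C p) b" "cp C ta p = cp C tb q"
    using pullbackD[OF assms(6)] assms(4,5) by (auto simp: hom_def)
  show ?thesis unfolding is_product_def
  proof (intro conjI allI impI)
    show "p \<in> ar C" "q \<in> ar C" "dm C p = dm C q" "cd C p = a" "cd C q = b"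
      using P by (auto simp: hom_def)
    fix u v assume uv: "u \<in> ar C" "v \<in> ar C" "dm C u = dm C v" "cd C u = a" "cd C v = b"
    let ?t = "dm C u"
    have uh: "u \<in> hom C ?t a" "v \<in> hom C ?t b" using uv by (auto simp: hom_def)
    have "cp C ta u \<in> hom C ?t t" "cp C tb v \<in> hom C ?t t" using uh assms(4,5) by auto
    then have eq: "cp C ta u = cp C tb v" using assms(1) hom_ob(1)[OF uh(1)] unfolding is_terminal_def by metis
    obtain h where h: "h \<in> hom C ?t (dm C p)" "cp C p h = u" "cp C q h = v"
      using pullback_univ[OF assms(6), of u ?t v] uh eq assms(4,5) by (auto simp: hom_def)
    show "\<exists>!h. h \<in> ar C \<and> dm C h = dm C u \<and> cd C h = dm C p \<and> cp C p h = u \<and> cp C q h = v"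
    proof (rule ex1I[of _ h])
      show "h \<in> ar C \<and> dm C h = dm C u \<and> cd C h = dm C p \<and> cp C p h = u \<and> cp C q h = v"
        using h by (auto simp: hom_def)
      fix h' assume "h' \<in> ar C \<and> dm C h' = dm C u \<and> cd C h' = dm C p \<and> cp C p h' = u \<and> cp C q h' = v"
      then show "h' = h" using pullback_uniq[OF assms(6), of h' ?t h] h by (auto simp: hom_def)
    qed
  qed
qed

lemma fc_product:
  assumes "finitely_complete C" "a \<in> ob C" "b \<in> ob C"
  obtains p q where "is_product C a b p q"
proof -
  obtain t where t: "is_terminal C t" using assms(1) unfolding finitely_complete_def by auto
  obtain ta where ta: "ta \<in> hom C a t" using t assms(2) unfolding is_terminal_def by auto
  obtain tb where tb: "tb \<in> hom C b t" using t assms(3) unfolding is_terminal_def by auto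
  have "\<exists>p q. is_pullback C ta tb p q"
    using assms(1) ta tb unfolding finitely_complete_def hom_def by simp
  then obtain p q where "is_pullback C ta tb p q" by blast
  then show ?thesis using that terminal_product[OF t assms(2,3) ta tb] by auto
qed

lemma fc_pullback:
  assumes "finitely_complete C" "f \<in> hom C a z" "g \<in> hom C b z"
  obtains p q where "is_pullback C f g p q"
proof -
  have "\<exists>p q. is_pullback C f g p q"
    using assms unfolding finitely_complete_def hom_def by simp
  then show ?thesis using that by blast
qed

end

locale fsys = category C for C :: "('o,'m) cat" +
  fixes E M :: "'m set"
  assumes pfs: "proper_fs C E M"
begin

lemma fs: "factorization_system C E M" using pfs by (simp add: proper_fs_def)

lemma fs1: "E \<subseteq> ar C" using fs unfolding factorization_system_def by (elim conjE) assumption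
lemma fs2: "M \<subseteq> ar C" using fs unfolding factorization_system_def by (elim conjE) assumption
lemma fs3: "{f. iso C f} \<subseteq> E \<inter> M" using fs unfolding factorization_system_def by (elim conjE) assumption
lemma fs4: "\<forall>f\<in>E. \<forall>g\<in>E. cd C f = dm C g \<longrightarrow> cp C g f \<in> E"
  using fs unfolding factorization_system_def by (elim conjE) assumption
lemma fs5: "\<forall>f\<in>M. \<forall>g\<in>M. cd C f = dm C g \<longrightarrow> cp C g f \<in> M"
  using fs unfolding factorization_system_def by (elim conjE) assumption
lemma fs6: "\<forall>f\<in>ar C. \<exists>e\<in>E. \<exists>m\<in>M. cd C e = dm C m \<and> f = cp C m e"
  using fs unfolding factorization_system_def by (elim conjE) assumption
lemma fs7: "\<forall>e\<in>E. \<forall>m\<in>M. \<forall>u v. u \<in> ar C \<longrightarrow> v \<in> ar C \<longrightarrow>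
        dm C u = dm C e \<longrightarrow> cd C u = dm C m \<longrightarrow> dm C v = cd C e \<longrightarrow> cd C v = cd C m \<longrightarrow>
        cp C v e = cp C m u \<longrightarrow>
        (\<exists>!d. d \<in> ar C \<and> dm C d = cd C e \<and> cd C d = dm C m \<and> cp C d e = u \<and> cp C m d = v)"
  using fs unfolding factorization_system_def by (elim conjE) assumption

lemma E_ar: "e \<in> E \<Longrightarrow> e \<in> ar C" using fs1 by blast
lemma M_ar: "m \<in> M \<Longrightarrow> m \<in> ar C" using fs2 by blast

lemma iso_E: "iso C f \<Longrightarrow> f \<in> E" using fs3 by blast
lemma iso_M: "iso C f \<Longrightarrow> f \<in> M" using fs3 by blast

lemma E_comp: "f \<in> E \<Longrightarrow> g \<in> E \<Longrightarrow> f \<in> hom C a b \<Longrightarrow> g \<in> hom C b c \<Longrightarrow> cp C g f \<in> E"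
proof -
  assume a: "f \<in> E" "g \<in> E" "f \<in> hom C a b" "g \<in> hom C b c"
  then have "cd C f = dm C g" by (simp add: hom_def)
  then show ?thesis using fs4 a by blast
qed
lemma M_comp: "f \<in> M \<Longrightarrow> g \<in> M \<Longrightarrow> f \<in> hom C a b \<Longrightarrow> g \<in> hom C b c \<Longrightarrow> cp C g f \<in> M"
proof -
  assume a: "f \<in> M" "g \<in> M" "f \<in> hom C a b" "g \<in> hom C b c"
  then have "cd C f = dm C g" by (simp add: hom_def)
  then show ?thesis using fs5 a by blast
qed

lemma E_epi: "e \<in> E \<Longrightarrow> epi C e" using pfs by (simp add: proper_fs_def)
lemma M_mono: "m \<in> M \<Longrightarrow> mono C m" using pfs by (simp add: proper_fs_def)

lemma M_cancel: "m \<in> M \<Longrightarrow> m \<in> hom C b c \<Longrightarrow> u \<in> hom C a b \<Longrightarrow> v \<in> hom C a b \<Longrightarrow>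
   cp C m u = cp C m v \<Longrightarrow> u = v"
  using monoD M_mono by blast

lemma E_cancel: "e \<in> E \<Longrightarrow> e \<in> hom C a b \<Longrightarrow> u \<in> hom C b c \<Longrightarrow> v \<in> hom C b c \<Longrightarrow>
   cp C u e = cp C v e \<Longrightarrow> u = v"
  using epiD E_epi by blast

lemma factor:
  assumes "f \<in> hom C a b"
  obtains k e m where "e \<in> E" "m \<in> M" "e \<in> hom C a k" "m \<in> hom C k b" "f = cp C m e"
proof -
  note fs6
  then obtain e m where em: "e \<in> E" "m \<in> M" "cd C e = dm C m" "f = cp C m e"
    using assms homD(1) by blast
  have "dm C e = a" "cd C m = b"
  proof -
    have "cp C m e \<in> hom C (dm C e) (cd C m)"
      by (rule comp_hom[of e "dm C e" "cd C e"]) (use em E_ar M_ar ar_hom in metis)+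
    then show "dm C e = a" "cd C m = b" using em(4) assms by (auto simp: hom_def)
  qed
  then show ?thesis using that[of e m "cd C e"] em E_ar M_ar by (auto simp: hom_def)
qed

lemma diag:
  assumes "e \<in> E" "m \<in> M" "e \<in> hom C a b" "m \<in> hom C c d" "u \<in> hom C a c" "v \<in> hom C b d"
    "cp C v e = cp C m u"
  obtains t where "t \<in> hom C b c" "cp C t e = u" "cp C m t = v"
proof -
  have U: "\<forall>e\<in>E. \<forall>m\<in>M. \<forall>u v. u \<in> ar C \<longrightarrow> v \<in> ar C \<longrightarrow>
        dm C u = dm C e \<longrightarrow> cd C u = dm C m \<longrightarrow> dm C v = cd C e \<longrightarrow> cd C v = cd C m \<longrightarrow>
        cp C v e = cp C m u \<longrightarrow>
        (\<exists>!d. d \<in> ar C \<and> dm C d = cd C e \<and> cd C d = dm C m \<and> cp C d e = u \<and> cp C m d = v)"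
    by (rule fs7)
  have "\<exists>!d. d \<in> ar C \<and> dm C d = cd C e \<and> cd C d = dm C m \<and> cp C d e = u \<and> cp C m d = v"
    apply (rule U[rule_format]) using assms by (auto simp: hom_def)
  then show ?thesis using that assms(3,4) by (auto simp: hom_def)
qed

lemma img_le:
  assumes "e \<in> E" "n \<in> M" "e \<in> hom C a k" "n \<in> hom C k b" "n' \<in> M" "n' \<in> hom C l b"
    "j \<in> hom C a l" "cp C n e = cp C n' j"
  obtains t where "t \<in> hom C k l" "n = cp C n' t"
  using diag[OF assms(1,5,3,6,7,4) assms(8)] by metis

lemma split_mono_M:
  assumes "g \<in> hom C a b" "s \<in> hom C b a" "cp C s g = idm C a"
  shows "g \<in> M"
proof -
  obtain k e m where em: "e \<in> E" "m \<in> M" "e \<in> hom C a k" "m \<in> hom C k b" "g = cp C m e"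
    using factor[OF assms(1)] by blast
  have sm: "cp C s m \<in> hom C k a" using em assms by blast
  have 1: "cp C (cp C s m) e = idm C a" using assoc[OF em(3) em(4) assms(2)] em(5) assms(3) by simp
  have "cp C (cp C e (cp C s m)) e = cp C e (cp C (cp C s m) e)"
    using assoc[OF em(3) sm em(3)] by simp
  also have "\<dots> = cp C (idm C k) e" using 1 em(3) by simp
  finally have "cp C e (cp C s m) = idm C k"
    using E_cancel[OF em(1) em(3), of "cp C e (cp C s m)" k "idm C k"] sm em(3) hom_ob[OF em(3)] by blast
  then have "iso C e" using isoI[OF em(3) sm 1] by simp
  then have "e \<in> M" by (rule iso_M)
  then show ?thesis using M_comp[OF _ em(2) em(3) em(4)] em(5) by simp
qed

lemma mono_split_epi_iso:
  assumes "mono C m" "m \<in> hom C a b" "s \<in> hom C b a" "cp C m s = idm C b"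
  shows "iso C m"
proof -
  have "cp C m (cp C s m) = cp C m (idm C a)"
    using assoc[OF assms(2,3,2)] assms(2,4) by simp
  then have "cp C s m = idm C a"
    using monoD[OF assms(1,2), of "cp C s m" a "idm C a"] assms(2,3) hom_ob[OF assms(2)] by blast
  then show ?thesis using isoI[OF assms(2,3)] assms(4) by simp
qed

lemma iso_mono: assumes "iso C f" "f \<in> hom C a b" shows "mono C f"
proof -
  obtain g where g: "g \<in> hom C b a" "cp C g f = idm C a" "cp C f g = idm C b" using isoE[OF assms] .
  show ?thesis unfolding mono_def
  proof (intro conjI allI impI)
    show "f \<in> ar C" using assms(2) by (simp add: hom_def)
    fix u v assume uv: "u \<in> ar C" "v \<in> ar C" "cd C u = dm C f" "cd C v = dm C f" "dm C u = dm C v"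
      "cp C f u = cp C f v"
    have uh: "u \<in> hom C (dm C u) a" "v \<in> hom C (dm C u) a" using uv assms(2) by (auto simp: hom_def)
    have "cp C (cp C g f) u = cp C (cp C g f) v"
      using assoc[OF uh(1) assms(2) g(1)] assoc[OF uh(2) assms(2) g(1)] uv(6) by simp
    then show "u = v" using g(2) uh by simp
  qed
qed

lemma pullback_mono:
  assumes "is_pullback C f n k q" "mono C n"
  shows "mono C k"
proof -
  note D = pullbackD[OF assms(1)]
  show ?thesis unfolding mono_def
  proof (intro conjI allI impI)
    show "k \<in> ar C" using D(3) by (simp add: hom_def)
    fix u v assume uv: "u \<in> ar C" "v \<in> ar C" "cd C u = dm C k" "cd C v = dm C k" "dm C u = dm C v"
      "cp C k u = cp C k v"
    have uh: "u \<in> hom C (dm C u) (dm C k)" "v \<in> hom C (dm C u) (dm C k)" using uv by (auto simp: hom_def)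
    have "cp C n (cp C q u) = cp C n (cp C q v)"
      using assoc[OF uh(1) D(4) D(2)] assoc[OF uh(2) D(4) D(2)] D(5)[symmetric]
        assoc[OF uh(1) D(3) D(1)] assoc[OF uh(2) D(3) D(1)] uv(6) by metis
    then have "cp C q u = cp C q v" using monoD[OF assms(2) D(2)] uh D(4) by blast
    then show "u = v" using pullback_uniq[OF assms(1) uh] uv(6) by blast
  qed
qed

lemma pullback_M:
  assumes "is_pullback C f n k q" "n \<in> M"
  shows "k \<in> M"
proof -
  note D = pullbackD[OF assms(1)]
  let ?P = "dm C k" and ?a = "dm C f" and ?z = "cd C f" and ?b = "dm C n"
  obtain l e2 n2 where f2: "e2 \<in> E" "n2 \<in> M" "e2 \<in> hom C ?P l" "n2 \<in> hom C l ?a" "k = cp C n2 e2"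
    using factor[OF D(3)] by blast
  have fn2: "cp C f n2 \<in> hom C l ?z" using f2 D by blast
  have sq: "cp C (cp C f n2) e2 = cp C n q"
    using assoc[OF f2(3,4) D(1)] f2(5) D(5) by simp
  obtain t where t: "t \<in> hom C l ?b" "cp C t e2 = q" "cp C n t = cp C f n2"
    using diag[OF f2(1) assms(2) f2(3) D(2) D(4) fn2 sq] by blast
  obtain h where h: "h \<in> hom C l ?P" "cp C k h = n2" "cp C q h = t"
    using pullback_univ[OF assms(1) f2(4) t(1) t(3)[symmetric]] by blast
  have mk: "mono C k" using pullback_mono[OF assms(1) M_mono[OF assms(2)]] .
  have he: "cp C h e2 \<in> hom C ?P ?P" using h f2 by blast
  have "cp C k (cp C h e2) = cp C k (idm C ?P)"
    using assoc[OF f2(3) h(1) D(3)] h(2) f2(5) D(3) by simp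
  then have 1: "cp C h e2 = idm C ?P" using monoD[OF mk D(3) he] hom_ob[OF D(3)] by blast
  have eh: "cp C e2 h \<in> hom C l l" using h f2 by blast
  have "cp C n2 (cp C e2 h) = cp C n2 (idm C l)"
    using assoc[OF h(1) f2(3) f2(4)] h(2) f2(5) f2(4) by simp
  then have 2: "cp C e2 h = idm C l" using M_cancel[OF f2(2) f2(4) eh] hom_ob[OF f2(4)] by blast
  have "iso C e2" using isoI[OF f2(3) h(1) 1 2] .
  then have "e2 \<in> M" by (rule iso_M)
  then show ?thesis using M_comp[OF _ f2(2) f2(3) f2(4)] f2(5) by simp
qed

lemma pullback_iso:
  assumes "is_pullback C f n k q" "iso C n"
  shows "iso C k"
proof -
  note D = pullbackD[OF assms(1)]
  obtain ni where ni: "ni \<in> hom C (cd C f) (dm C n)" "cp C ni n = idm C (dm C n)" "cp C n ni = idm C (cd C f)"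
    using isoE[OF assms(2) D(2)] by blast
  have a: "dm C f \<in> ob C" using hom_ob[OF D(1)] by simp
  have v: "cp C ni f \<in> hom C (dm C f) (dm C n)" using ni D by blast
  have "cp C f (idm C (dm C f)) = cp C n (cp C ni f)"
    using assoc[OF D(1) ni(1) D(2)] ni(3) D(1) by simp
  then obtain h where h: "h \<in> hom C (dm C f) (dm C k)" "cp C k h = idm C (dm C f)"
    using pullback_univ[OF assms(1) id_hom[OF a] v] by metis
  have mk: "mono C k" using pullback_mono[OF assms(1) iso_mono[OF assms(2) D(2)]] .
  show ?thesis using mono_split_epi_iso[OF mk D(3) h] .
qed

end

locale setting =
  fixes X :: "('o, 'm) cat" and P :: "'o set"
    and E M F N :: "'m set"
    and R :: "'o \<Rightarrow> 'o" and \<rho> :: "'o \<Rightarrow> 'm"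
    and c :: "'o \<Rightarrow> 'm \<Rightarrow> 'm"
  assumes catX: "is_cat X"
    and fcX: "finitely_complete X"
    and fcA: "finitely_complete (fullsub X P)"
    and fsX: "proper_fs X E M"
    and fsA: "proper_fs (fullsub X P) F N"
    and subA: "P \<subseteq> ob X"
    and refl: "is_reflection X P R \<rho>"
    and NM: "N \<subseteq> M"
    and RE: "\<forall>f\<in>E. Rmor X R \<rho> f \<in> F"
    and Estable: "stable_under_pullback X E"
    and clos: "closure_operator (fullsub X P) F N c"
begin

sublocale X: fsys X E M
  by (unfold_locales) (auto simp: catX fsX)

sublocale A: fsys "fullsub X P" F N
  rewrites "cp (fullsub X P) = cp X" and "dm (fullsub X P) = dm X" and "cd (fullsub X P) = cd X"
    and "idm (fullsub X P) = idm X"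
  by (unfold_locales) (auto simp: catX fsA subA is_cat_fullsub)

lemma homA: "f \<in> hom (fullsub X P) a b \<longleftrightarrow> f \<in> hom X a b \<and> a \<in> P \<and> b \<in> P"
  by (auto simp: hom_def)

lemma homA_I: "f \<in> hom X a b \<Longrightarrow> a \<in> P \<Longrightarrow> b \<in> P \<Longrightarrow> f \<in> hom (fullsub X P) a b"
  by (simp add: homA)

lemma F_hom: "f \<in> F \<Longrightarrow> f \<in> hom (fullsub X P) (dm X f) (cd X f)"
  using A.E_ar by (auto simp: hom_def)
lemma N_hom: "n \<in> N \<Longrightarrow> n \<in> hom (fullsub X P) (dm X n) (cd X n)"
  using A.M_ar by (auto simp: hom_def)

lemma subA_le: "m \<in> ar (fullsub X P) \<Longrightarrow> n \<in> ar (fullsub X P) \<Longrightarrow> sub_le (fullsub X P) m n \<longleftrightarrow> sub_le X m n"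
  unfolding sub_le_def by auto

lemma sub_le_trans: "sub_le X m n \<Longrightarrow> sub_le X n l \<Longrightarrow> l \<in> ar X \<Longrightarrow> sub_le X m l"
  unfolding sub_le_def
proof (elim bexE conjE)
  fix j1 j2 assume a: "j1 \<in> ar X" "dm X j1 = dm X m" "cd X j1 = dm X n" "m = cp X n j1"
    "j2 \<in> ar X" "dm X j2 = dm X n" "cd X j2 = dm X l" "n = cp X l j2" "l \<in> ar X"
  have h: "j1 \<in> hom X (dm X m) (dm X n)" "j2 \<in> hom X (dm X n) (dm X l)" "l \<in> hom X (dm X l) (cd X l)"
    using a by (auto simp: hom_def)
  have "cp X j2 j1 \<in> hom X (dm X m) (dm X l)" using h by blast
  moreover have "m = cp X l (cp X j2 j1)" using X.assoc[OF h] a by simp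
  ultimately show "\<exists>j\<in>ar X. dm X j = dm X m \<and> cd X j = dm X l \<and> m = cp X l j" by (auto simp: hom_def)
qed

lemma sub_le_refl: "m \<in> ar X \<Longrightarrow> sub_le X m m"
  unfolding sub_le_def by (rule bexI[of _ "idm X (dm X m)"]) (use X.id_hom X.ar_hom X.hom_ob in \<open>auto simp: hom_def\<close>)

section \<open>Reflection\<close>

lemma reflU: "x \<in> ob X \<Longrightarrow> R x \<in> ob X \<inter> P \<and> \<rho> x \<in> hom X x (R x) \<and>
     (\<forall>a\<in>ob X \<inter> P. \<forall>f\<in>hom X x a. \<exists>!g. g \<in> hom X (R x) a \<and> cp X g (\<rho> x) = f)"
  using refl unfolding is_reflection_def by (rule bspec)

lemma R_ob: "x \<in> ob X \<Longrightarrow> R x \<in> ob X" "x \<in> ob X \<Longrightarrow> R x \<in> P"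
  using reflU by blast+

lemma rho_hom: "x \<in> ob X \<Longrightarrow> \<rho> x \<in> hom X x (R x)"
  using reflU by blast

lemma refl_univ: assumes "x \<in> ob X" "a \<in> P" "f \<in> hom X x a"
  shows "\<exists>!g. g \<in> hom X (R x) a \<and> cp X g (\<rho> x) = f"
proof -
  have U: "\<forall>a\<in>ob X \<inter> P. \<forall>f\<in>hom X x a. \<exists>!g. g \<in> hom X (R x) a \<and> cp X g (\<rho> x) = f"
    using reflU[OF assms(1)] by (elim conjE)
  have "a \<in> ob X \<inter> P" using assms subA by auto
  from bspec[OF bspec[OF U this] assms(3)] show ?thesis .
qed

lemma refl_uniq: assumes "x \<in> ob X" "a \<in> P" "g \<in> hom X (R x) a" "g' \<in> hom X (R x) a"
  "cp X g (\<rho> x) = cp X g' (\<rho> x)"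
  shows "g = g'"
proof -
  have f: "cp X g (\<rho> x) \<in> hom X x a" using assms rho_hom by blast
  obtain k where k: "\<And>y. y \<in> hom X (R x) a \<and> cp X y (\<rho> x) = cp X g (\<rho> x) \<Longrightarrow> y = k"
    using refl_univ[OF assms(1,2) f] by (elim ex1E) blast
  have "g = k" by (rule k) (use assms in simp)
  moreover have "g' = k" by (rule k) (use assms in simp)
  ultimately show ?thesis by simp
qed

lemma rho_iso: assumes "a \<in> P" shows "iso X (\<rho> a)"
proof -
  have a: "a \<in> ob X" using assms subA by auto
  obtain r where r: "r \<in> hom X (R a) a" "cp X r (\<rho> a) = idm X a"
    using refl_univ[OF a assms X.id_hom[OF a]] by blast
  have ra: "\<rho> a \<in> hom X a (R a)" using rho_hom[OF a] .
  have "cp X (cp X (\<rho> a) r) (\<rho> a) = cp X (idm X (R a)) (\<rho> a)"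
    using X.assoc[OF ra r(1) ra] r(2) ra by simp
  then have "cp X (\<rho> a) r = idm X (R a)"
    using refl_uniq[OF a R_ob(2)[OF a], of "cp X (\<rho> a) r" "idm X (R a)"] ra r(1) X.id_hom R_ob[OF a]
    by blast
  then show ?thesis using X.isoI[OF ra r(1) r(2)] by simp
qed

lemma Rmor_spec: assumes "f \<in> hom X a b"
  shows "Rmor X R \<rho> f \<in> hom X (R a) (R b)" "cp X (Rmor X R \<rho> f) (\<rho> a) = cp X (\<rho> b) f"
proof -
  have a: "a \<in> ob X" "b \<in> ob X" using X.hom_ob[OF assms] by auto
  have g: "cp X (\<rho> b) f \<in> hom X a (R b)" using assms rho_hom[OF a(2)] by blast
  have ex: "\<exists>!g. g \<in> hom X (R a) (R b) \<and> cp X g (\<rho> a) = cp X (\<rho> b) f"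
    using refl_univ[OF a(1) R_ob(2)[OF a(2)] g] .
  have dc: "dm X f = a" "cd X f = b" using assms by (auto simp: hom_def)
  have "Rmor X R \<rho> f \<in> hom X (R a) (R b) \<and> cp X (Rmor X R \<rho> f) (\<rho> a) = cp X (\<rho> b) f"
    unfolding Rmor_def dc by (rule theI'[OF ex])
  then show "Rmor X R \<rho> f \<in> hom X (R a) (R b)" "cp X (Rmor X R \<rho> f) (\<rho> a) = cp X (\<rho> b) f" by auto
qed

lemma Rmor_uniq: assumes "f \<in> hom X a b" "g \<in> hom X (R a) (R b)" "cp X g (\<rho> a) = cp X (\<rho> b) f"
  shows "Rmor X R \<rho> f = g"
proof -
  have a: "a \<in> ob X" "b \<in> ob X" using X.hom_ob[OF assms(1)] by auto
  show ?thesis using refl_uniq[OF a(1) R_ob(2)[OF a(2)] Rmor_spec(1)[OF assms(1)] assms(2)]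
    Rmor_spec(2)[OF assms(1)] assms(3) by simp
qed

lemma Rmor_homA: "f \<in> hom X a b \<Longrightarrow> Rmor X R \<rho> f \<in> hom (fullsub X P) (R a) (R b)"
  using Rmor_spec(1) R_ob X.hom_ob homA by metis

lemma Rmor_comp: assumes "f \<in> hom X a b" "g \<in> hom X b z"
  shows "Rmor X R \<rho> (cp X g f) = cp X (Rmor X R \<rho> g) (Rmor X R \<rho> f)"
proof (rule Rmor_uniq)
  show "cp X g f \<in> hom X a z" using assms by blast
  have a: "a \<in> ob X" using X.hom_ob[OF assms(1)] by auto
  note Rf = Rmor_spec[OF assms(1)] and Rg = Rmor_spec[OF assms(2)]
  show "cp X (Rmor X R \<rho> g) (Rmor X R \<rho> f) \<in> hom X (R a) (R z)" using Rf Rg by blast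
  have "cp X (cp X (Rmor X R \<rho> g) (Rmor X R \<rho> f)) (\<rho> a) = cp X (Rmor X R \<rho> g) (cp X (Rmor X R \<rho> f) (\<rho> a))"
    using X.assoc[OF rho_hom[OF a] Rf(1) Rg(1)] by simp
  also have "\<dots> = cp X (Rmor X R \<rho> g) (cp X (\<rho> b) f)" using Rf(2) by simp
  also have "\<dots> = cp X (cp X (\<rho> z) g) f"
    using X.assoc[OF assms(1) rho_hom Rg(1)] X.hom_ob[OF assms(2)] Rg(2) by simp
  also have "\<dots> = cp X (\<rho> z) (cp X g f)"
    using X.assoc[OF assms(1) assms(2) rho_hom] X.hom_ob[OF assms(2)] by simp
  finally show "cp X (cp X (Rmor X R \<rho> g) (Rmor X R \<rho> f)) (\<rho> a) = cp X (\<rho> z) (cp X g f)" .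
qed

lemma Rmor_rho: assumes "x \<in> ob X" shows "Rmor X R \<rho> (\<rho> x) = \<rho> (R x)"
  by (rule Rmor_uniq[OF rho_hom[OF assms]]) (use rho_hom R_ob assms in auto)

lemma Rmor_E: "f \<in> E \<Longrightarrow> Rmor X R \<rho> f \<in> F" using RE by blast

end

context category
begin

lemma cp_ar: "f \<in> ar C \<Longrightarrow> g \<in> ar C \<Longrightarrow> cd C f = dm C g \<Longrightarrow> cp C g f \<in> ar C"
  using is_cat unfolding is_cat_def by blast
lemma dm_cp: "f \<in> ar C \<Longrightarrow> g \<in> ar C \<Longrightarrow> cd C f = dm C g \<Longrightarrow> dm C (cp C g f) = dm C f"
  using is_cat unfolding is_cat_def by blast
lemma cd_cp: "f \<in> ar C \<Longrightarrow> g \<in> ar C \<Longrightarrow> cd C f = dm C g \<Longrightarrow> cd C (cp C g f) = cd C g"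
  using is_cat unfolding is_cat_def by blast
lemma assoc_ar: "f \<in> ar C \<Longrightarrow> g \<in> ar C \<Longrightarrow> h \<in> ar C \<Longrightarrow> cd C f = dm C g \<Longrightarrow> cd C g = dm C h \<Longrightarrow>
   cp C h (cp C g f) = cp C (cp C h g) f"
  using is_cat unfolding is_cat_def by blast

lemmas cat_simps = cp_ar dm_cp cd_cp assoc_ar

lemma homS: "f \<in> hom C a b \<Longrightarrow> f \<in> ar C \<and> dm C f = a \<and> cd C f = b"
  by (simp add: hom_def)

end

context setting
begin

abbreviation d where "d \<equiv> crho X P F N R \<rho> c"
abbreviation Rm where "Rm \<equiv> Rmor X R \<rho>"
abbreviation A where "A \<equiv> fullsub X P"

lemma cU: assumes "a \<in> P" "n \<in> N" "cd X n = a"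
  shows "c a n \<in> sub A N a \<and> sub_le A n (c a n) \<and>
        (\<forall>n'\<in>sub A N a. sub_le A n n' \<longrightarrow> sub_le A (c a n) (c a n')) \<and>
        (\<forall>f y n1 n2. f \<in> hom A a y \<longrightarrow> is_image A F N f (c a n) n1 \<longrightarrow> is_image A F N f n n2
            \<longrightarrow> sub_le A n1 (c y n2))"
proof -
  have a: "a \<in> ob A" using assms subA by auto
  have n: "n \<in> sub A N a" using assms by (simp add: sub_def)
  show ?thesis using bspec[OF bspec[OF clos[unfolded closure_operator_def] a] n] .
qed

lemma c_N: assumes "a \<in> P" "n \<in> N" "cd X n = a"
  shows "c a n \<in> N" "c a n \<in> hom X (dm X (c a n)) a" "dm X (c a n) \<in> P"
proof -
  have "c a n \<in> sub A N a" using cU[OF assms] by (elim conjE)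
  then show "c a n \<in> N" "c a n \<in> hom X (dm X (c a n)) a" "dm X (c a n) \<in> P"
    using A.M_ar by (auto simp: sub_def hom_def)
qed

lemma c_ext: assumes "a \<in> P" "n \<in> N" "cd X n = a"
  shows "sub_le X n (c a n)"
proof -
  have "sub_le A n (c a n)" using cU[OF assms] by (elim conjE)
  then show ?thesis using subA_le A.M_ar c_N(1)[OF assms] assms(2) by blast
qed

lemma c_mono: assumes "a \<in> P" "n \<in> N" "cd X n = a" "n' \<in> N" "cd X n' = a" "sub_le X n n'"
  shows "sub_le X (c a n) (c a n')"
proof -
  have le: "sub_le A n n'" using subA_le A.M_ar assms by blast
  have U: "\<forall>n'\<in>sub A N a. sub_le A n n' \<longrightarrow> sub_le A (c a n) (c a n')" using cU[OF assms(1-3)] by (elim conjE)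
  have "n' \<in> sub A N a" using assms(4,5) by (simp add: sub_def)
  then have "sub_le A (c a n) (c a n')" using U le by blast
  then show ?thesis using subA_le A.M_ar c_N(1) assms by blast
qed

lemma c_cont: assumes "a \<in> P" "n \<in> N" "cd X n = a" "f \<in> hom X a b" "b \<in> P"
  "n1 \<in> N" "f1 \<in> F" "cd X f1 = dm X n1" "cp X f (c a n) = cp X n1 f1"
  "n2 \<in> N" "f2 \<in> F" "cd X f2 = dm X n2" "cp X f n = cp X n2 f2"
  shows "sub_le X n1 (c b n2)"
proof -
  have fA: "f \<in> hom A a b" using assms homA by auto
  have i1: "is_image A F N f (c a n) n1" using assms unfolding is_image_def by auto
  have i2: "is_image A F N f n n2" using assms unfolding is_image_def by auto
  have U: "\<forall>f y n1 n2. f \<in> hom A a y \<longrightarrow> is_image A F N f (c a n) n1 \<longrightarrow> is_image A F N f n n2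
            \<longrightarrow> sub_le A n1 (c y n2)" using cU[OF assms(1-3)] by (elim conjE)
  have le: "sub_le A n1 (c b n2)" using U fA i1 i2 by blast
  have "cd X n2 = b"
  proof -
    have "n \<in> hom X (dm X n) a" using A.M_ar assms(2,3) by (auto simp: hom_def)
    then have "cp X f n \<in> hom X (dm X n) b" using X.comp_hom[OF _ assms(4)] by blast
    then show ?thesis using assms(10-13) A.M_ar A.E_ar X.cd_cp by (auto simp: hom_def)
  qed
  then have "c b n2 \<in> N" using c_N(1) assms by blast
  then show ?thesis using le subA_le A.M_ar assms(6) by blast
qed

lemma d_spec: assumes "x \<in> ob X" "m \<in> hom X y x"
  obtains n fn q where "n \<in> N" "fn \<in> F" "fn \<in> hom X (R y) (dm X n)" "n \<in> hom X (dm X n) (R x)"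
    "dm X n \<in> P" "Rm m = cp X n fn" "is_pullback X (\<rho> x) (c (R x) n) (d x m) q"
proof -
  have y: "y \<in> ob X" using X.hom_ob[OF assms(2)] by simp
  have RmA: "Rm m \<in> hom A (R y) (R x)" using Rmor_homA[OF assms(2)] .
  have RmX: "Rm m \<in> hom X (R y) (R x)" using Rmor_spec[OF assms(2)] by simp
  have dmm: "dm X m = y" using assms(2) by (simp add: hom_def)
  define Q where "Q = (\<lambda>k. \<exists>n. is_image A F N (Rm m) (idm X (R (dm X m))) n \<and>
      is_preimage X (\<rho> x) (c (R x) n) k)"
  have ex: "\<exists>k. Q k"
  proof -
    obtain k e' n' where f: "e' \<in> F" "n' \<in> N" "e' \<in> hom A (R y) k" "n' \<in> hom A k (R x)" "Rm m = cp X n' e'"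
      using A.factor[OF RmA] by blast
    have img: "is_image A F N (Rm m) (idm X (R (dm X m))) n'"
      unfolding is_image_def dmm using f RmX by (auto simp: hom_def)
    have "c (R x) n' \<in> hom X (dm X (c (R x) n')) (R x)"
      using c_N[OF R_ob(2)[OF assms(1)] f(2)] f(4) by (auto simp: hom_def)
    then obtain p q where "is_pullback X (\<rho> x) (c (R x) n') p q"
      using X.fc_pullback[OF fcX rho_hom[OF assms(1)]] by blast
    then show ?thesis unfolding Q_def is_preimage_def using img by blast
  qed
  have "Q (d x m)" unfolding crho_def Q_def[symmetric] using someI_ex[OF ex] .
  then obtain n q fn where n: "n \<in> N" "fn \<in> F" "cd X fn = dm X n"
     "cp X (Rm m) (idm X (R y)) = cp X n fn" "is_pullback X (\<rho> x) (c (R x) n) (d x m) q"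
    unfolding Q_def is_image_def is_preimage_def dmm by auto
  have eq: "Rm m = cp X n fn" using n(4) RmX by simp
  have ar: "n \<in> ar X" "fn \<in> ar X" using n A.M_ar A.E_ar by auto
  have "dm X fn = R y" "cd X n = R x" using X.dm_cp[OF ar(2,1) n(3)] X.cd_cp[OF ar(2,1) n(3)] eq RmX
    by (auto simp: hom_def)
  moreover have "dm X n \<in> P" using n(1) A.M_ar by auto
  ultimately show ?thesis using that[OF n(1,2) _ _ _ eq n(5)] ar n(3) by (auto simp: hom_def)
qed

end

context setting
begin

lemma d_hom: assumes "x \<in> ob X" "m \<in> hom X y x"
  shows "d x m \<in> M" "d x m \<in> hom X (dm X (d x m)) x"
proof -
  obtain n fn q where s: "n \<in> N" "fn \<in> F" "fn \<in> hom X (R y) (dm X n)" "n \<in> hom X (dm X n) (R x)"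
    "dm X n \<in> P" "Rm m = cp X n fn" "is_pullback X (\<rho> x) (c (R x) n) (d x m) q"
    using d_spec[OF assms] by blast
  have "cd X n = R x" using s(4) by (simp add: hom_def)
  then have "c (R x) n \<in> M" using c_N(1)[OF R_ob(2)[OF assms(1)] s(1)] NM by blast
  then show "d x m \<in> M" using X.pullback_M[OF s(7)] by blast
  show "d x m \<in> hom X (dm X (d x m)) x" using X.pullbackD(3)[OF s(7)] rho_hom[OF assms(1)]
    by (simp add: hom_def)
qed

lemma d_mono: assumes "x \<in> ob X" "m \<in> hom X y x" "m' \<in> hom X y' x" "j \<in> hom X y y'" "m = cp X m' j"
  shows "sub_le X (d x m) (d x m')"
proof -
  obtain n fn q where s: "n \<in> N" "fn \<in> F" "fn \<in> hom X (R y) (dm X n)" "n \<in> hom X (dm X n) (R x)"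
    "dm X n \<in> P" "Rm m = cp X n fn" "is_pullback X (\<rho> x) (c (R x) n) (d x m) q"
    using d_spec[OF assms(1,2)] by blast
  obtain n' fn' q' where s': "n' \<in> N" "fn' \<in> F" "fn' \<in> hom X (R y') (dm X n')" "n' \<in> hom X (dm X n') (R x)"
    "dm X n' \<in> P" "Rm m' = cp X n' fn'" "is_pullback X (\<rho> x) (c (R x) n') (d x m') q'"
    using d_spec[OF assms(1,3)] by blast
  have Rx: "R x \<in> P" using R_ob(2)[OF assms(1)] .
  have y: "y \<in> ob X" "y' \<in> ob X" using X.hom_ob assms by blast+
  have Rj: "Rm j \<in> hom X (R y) (R y')" using Rmor_spec(1)[OF assms(4)] .
  have "Rm m = cp X (Rm m') (Rm j)" using Rmor_comp[OF assms(4,3)] assms(5) by simp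
  also have "\<dots> = cp X n' (cp X fn' (Rm j))" using X.assoc[OF Rj s'(3) s'(4)] s'(6) by simp
  finally have eq: "cp X n fn = cp X n' (cp X fn' (Rm j))" using s(6) by simp
  have j': "cp X fn' (Rm j) \<in> hom A (R y) (dm X n')" using Rj s'(3) R_ob(2)[OF y(1)] s'(5)
    by (auto simp: homA)
  have hA: "fn \<in> hom A (R y) (dm X n)" "n \<in> hom A (dm X n) (R x)" "n' \<in> hom A (dm X n') (R x)"
    using s s' Rx R_ob(2)[OF y(1)] by (auto simp: homA)
  obtain t where t: "t \<in> hom A (dm X n) (dm X n')" "n = cp X n' t"
    using A.img_le[OF s(2) s(1) hA(1) hA(2) s'(1) hA(3) j' eq] by blast
  have le: "sub_le X n n'" using t s s' by (auto simp: sub_le_def hom_def)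
  have cdn: "cd X n = R x" "cd X n' = R x" using s(4) s'(4) by (auto simp: hom_def)
  obtain u where u: "u \<in> hom X (dm X (c (R x) n)) (dm X (c (R x) n'))" "c (R x) n = cp X (c (R x) n') u"
    using X.sub_leE[OF c_mono[OF Rx s(1) cdn(1) s'(1) cdn(2) le] c_N(2)[OF Rx s(1) cdn(1)] c_N(2)[OF Rx s'(1) cdn(2)]] .
  note D = X.pullbackD[OF s(7)] and D' = X.pullbackD[OF s'(7)]
  have rx: "dm X (\<rho> x) = x" using rho_hom[OF assms(1)] by (simp add: hom_def)
  have dmh: "d x m \<in> hom X (dm X (d x m)) x" using D(3) rx by simp
  have uq: "cp X u q \<in> hom X (dm X (d x m)) (dm X (c (R x) n'))" using u(1) D(4) by blast
  have "cp X (\<rho> x) (d x m) = cp X (c (R x) n') (cp X u q)"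
    using D(5) u(2) X.assoc[OF D(4) u(1) c_N(2)[OF Rx s'(1) cdn(2)]] by simp
  then obtain h where h: "h \<in> hom X (dm X (d x m)) (dm X (d x m'))" "cp X (d x m') h = d x m"
    using X.pullback_univ[OF s'(7), of "d x m" "dm X (d x m)" "cp X u q"] dmh uq rx by auto
  show ?thesis using h D'(3) dmh by (auto simp: sub_le_def hom_def)
qed

lemma d_cont: assumes "x \<in> ob X" "f \<in> hom X x y" "m \<in> hom X w x" "e' \<in> E" "n' \<in> M"
  "e' \<in> hom X w k" "n' \<in> hom X k y" "cp X f m = cp X n' e'"
  shows "sub_le X (cp X f (d x m)) (d y n')"
proof -
  have y: "y \<in> ob X" using X.hom_ob(2)[OF assms(2)] .
  have w: "w \<in> ob X" using X.hom_ob(1)[OF assms(3)] .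
  have k: "k \<in> ob X" using X.hom_ob(1)[OF assms(7)] .
  have Rx: "R x \<in> P" and Ry: "R y \<in> P" and Rw: "R w \<in> P" and Rk: "R k \<in> P"
    using R_ob(2) assms(1) y w k by auto
  obtain n fn q where s: "n \<in> N" "fn \<in> F" "fn \<in> hom X (R w) (dm X n)" "n \<in> hom X (dm X n) (R x)"
    "dm X n \<in> P" "Rm m = cp X n fn" "is_pullback X (\<rho> x) (c (R x) n) (d x m) q"
    using d_spec[OF assms(1,3)] by blast
  obtain n'' fn'' q'' where s': "n'' \<in> N" "fn'' \<in> F" "fn'' \<in> hom X (R k) (dm X n'')"
    "n'' \<in> hom X (dm X n'') (R y)"
    "dm X n'' \<in> P" "Rm n' = cp X n'' fn''" "is_pullback X (\<rho> y) (c (R y) n'') (d y n') q''"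
    using d_spec[OF y assms(7)] by blast
  have Rf: "Rm f \<in> hom X (R x) (R y)" "cp X (Rm f) (\<rho> x) = cp X (\<rho> y) f" using Rmor_spec[OF assms(2)] by auto
  have cdn: "cd X n = R x" "cd X n'' = R y" using s(4) s'(4) by (auto simp: hom_def)
  define cn where "cn = c (R x) n"
  have cn: "cn \<in> N" "cn \<in> hom X (dm X cn) (R x)" "dm X cn \<in> P"
    using c_N[OF Rx s(1) cdn(1)] unfolding cn_def by auto
  define cn'' where "cn'' = c (R y) n''"
  have cn'': "cn'' \<in> N" "cn'' \<in> hom X (dm X cn'') (R y)" "dm X cn'' \<in> P"
    using c_N[OF Ry s'(1) cdn(2)] unfolding cn''_def by auto
  have RfcnA: "cp X (Rm f) cn \<in> hom A (dm X cn) (R y)" using Rf(1) cn Ry by (auto simp: homA)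
  obtain k1 f1 n1 where F1: "f1 \<in> F" "n1 \<in> N" "f1 \<in> hom A (dm X cn) k1" "n1 \<in> hom A k1 (R y)"
     "cp X (Rm f) cn = cp X n1 f1"
    using A.factor[OF RfcnA] by blast
  have RfnA: "cp X (Rm f) n \<in> hom A (dm X n) (R y)" using Rf(1) s(4,5) Ry by (auto simp: homA)
  obtain k2 f2 n2 where F2: "f2 \<in> F" "n2 \<in> N" "f2 \<in> hom A (dm X n) k2" "n2 \<in> hom A k2 (R y)"
     "cp X (Rm f) n = cp X n2 f2"
    using A.factor[OF RfnA] by blast
  have le1: "sub_le X n1 (c (R y) n2)"
    by (rule c_cont[OF Rx s(1) cdn(1) Rf(1) Ry F1(2) F1(1) _ F1(5)[unfolded cn_def] F2(2) F2(1) _ F2(5)])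
       (use F1 F2 in \<open>auto simp: hom_def\<close>)
  have fnA: "fn \<in> hom A (R w) (dm X n)" using s Rw by (auto simp: homA)
  have f2fn: "cp X f2 fn \<in> F" "cp X f2 fn \<in> hom A (R w) k2"
    using A.E_comp[OF s(2) F2(1) fnA F2(3)] fnA F2(3) A.comp_hom by auto
  have Re': "Rm e' \<in> F" "Rm e' \<in> hom X (R w) (R k)" using Rmor_E[OF assms(4)] Rmor_spec(1)[OF assms(6)] by auto
  have jA: "cp X fn'' (Rm e') \<in> hom A (R w) (dm X n'')" using Re'(2) s'(3,5) Rw by (auto simp: homA)

  have "cp X n2 (cp X f2 fn) = cp X (cp X n2 f2) fn"
    using A.assoc[OF fnA F2(3) F2(4)] .
  also have "\<dots> = cp X (cp X (Rm f) n) fn" using F2(5) by simp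
  also have "\<dots> = cp X (Rm f) (Rm m)"
    using X.assoc[OF s(3) s(4) Rf(1)] s(6) by simp
  also have "\<dots> = Rm (cp X f m)" using Rmor_comp[OF assms(3,2)] by simp
  also have "\<dots> = cp X (Rm n') (Rm e')" using Rmor_comp[OF assms(6,7)] assms(8) by simp
  also have "\<dots> = cp X n'' (cp X fn'' (Rm e'))" using X.assoc[OF Re'(2) s'(3) s'(4)] s'(6) by simp
  finally have eq2: "cp X n2 (cp X f2 fn) = cp X n'' (cp X fn'' (Rm e'))" .
  have n''A: "n'' \<in> hom A (dm X n'') (R y)" using s' Ry by (auto simp: homA)
  obtain t where t: "t \<in> hom A k2 (dm X n'')" "n2 = cp X n'' t"
    using A.img_le[OF f2fn(1) F2(2) f2fn(2) F2(4) s'(1) n''A jA eq2] by blast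
  have le2: "sub_le X n2 n''" using t F2(4) s'(4) by (auto simp: sub_le_def hom_def)
  have cdn2: "cd X n2 = R y" using F2(4) by (simp add: hom_def)
  have le3: "sub_le X (c (R y) n2) cn''"
    unfolding cn''_def by (rule c_mono[OF Ry F2(2) cdn2 s'(1) cdn(2) le2])
  have le4: "sub_le X n1 cn''" using sub_le_trans[OF le1 le3] cn''(2) by (auto simp: hom_def)
  obtain t1 where t1: "t1 \<in> hom X k1 (dm X cn'')" "n1 = cp X cn'' t1"
    using X.sub_leE[OF le4, of k1 "R y" "dm X cn''"] F1(4) cn''(2) by (auto simp: homA)
  note D = X.pullbackD[OF s(7)] and D' = X.pullbackD[OF s'(7)]
  have rx: "dm X (\<rho> x) = x" "dm X (\<rho> y) = y" using rho_hom assms(1) y by (auto simp: hom_def)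
  define P0 where "P0 = dm X (d x m)"
  have dxm: "d x m \<in> hom X P0 x" using D(3) rx unfolding P0_def by simp
  have qh: "q \<in> hom X P0 (dm X cn)" using D(4) unfolding P0_def cn_def .
  have f1X: "f1 \<in> hom X (dm X cn) k1" using F1(3) by (simp add: homA)
  have n1X: "n1 \<in> hom X k1 (R y)" using F1(4) by (simp add: homA)
  have "cp X (\<rho> y) (cp X f (d x m)) = cp X (cp X (\<rho> y) f) (d x m)"
    using X.assoc[OF dxm assms(2) rho_hom[OF y]] .
  also have "\<dots> = cp X (cp X (Rm f) (\<rho> x)) (d x m)" using Rf(2) by simp
  also have "\<dots> = cp X (Rm f) (cp X (\<rho> x) (d x m))"
    using X.assoc[OF dxm rho_hom[OF assms(1)] Rf(1)] by simp
  also have "\<dots> = cp X (Rm f) (cp X cn q)" using D(5) unfolding cn_def by simp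
  also have "\<dots> = cp X (cp X n1 f1) q" using X.assoc[OF qh cn(2) Rf(1)] F1(5) by simp
  also have "\<dots> = cp X n1 (cp X f1 q)" using X.assoc[OF qh f1X n1X] by simp
  also have "\<dots> = cp X cn'' (cp X t1 (cp X f1 q))"
  proof -
    have "cp X f1 q \<in> hom X P0 k1" using qh f1X by blast
    then show ?thesis using X.assoc[OF _ t1(1) cn''(2), of "cp X f1 q" P0] t1(2) by simp
  qed
  finally have eq: "cp X (\<rho> y) (cp X f (d x m)) = cp X (c (R y) n'') (cp X t1 (cp X f1 q))"
    unfolding cn''_def .
  have u: "cp X f (d x m) \<in> hom X P0 y" using dxm assms(2) by blast
  have v: "cp X t1 (cp X f1 q) \<in> hom X P0 (dm X (c (R y) n''))" using qh f1X t1(1) unfolding cn''_def by blast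
  obtain h where h: "h \<in> hom X P0 (dm X (d y n'))" "cp X (d y n') h = cp X f (d x m)"
    using X.pullback_univ[OF s'(7), of "cp X f (d x m)" P0 "cp X t1 (cp X f1 q)"] u v eq rx by auto
  show ?thesis using h D'(3) u by (auto simp: sub_le_def hom_def)
qed

end

context setting
begin

lemma iso_inv: assumes "iso X f" "f \<in> hom X a b"
  obtains g where "g \<in> hom X b a" "cp X g f = idm X a" "cp X f g = idm X b"
  using X.isoE[OF assms] .

lemma d_le_c: assumes "Q \<in> P" "\<delta> \<in> N" "cd X \<delta> = Q"
  shows "sub_le X (d Q \<delta>) (c Q \<delta>)"
proof -
  define D where "D = dm X \<delta>"
  have DP: "D \<in> P" using assms(2) A.M_ar unfolding D_def by auto
  have Qo: "Q \<in> ob X" and Do: "D \<in> ob X" using assms(1) DP subA by auto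
  have dl: "\<delta> \<in> hom X D Q" using assms(2,3) A.M_ar unfolding D_def by (auto simp: hom_def)
  have dlA: "\<delta> \<in> hom A D Q" using dl DP assms(1) by (simp add: homA)
  obtain n fn q where s: "n \<in> N" "fn \<in> F" "fn \<in> hom X (R D) (dm X n)" "n \<in> hom X (dm X n) (R Q)"
    "dm X n \<in> P" "Rm \<delta> = cp X n fn" "is_pullback X (\<rho> Q) (c (R Q) n) (d Q \<delta>) q"
    using d_spec[OF Qo dl] by blast
  have RQ: "R Q \<in> P" "R D \<in> P" using R_ob(2) Qo Do by auto
  have rQ: "\<rho> Q \<in> hom X Q (R Q)" and rD: "\<rho> D \<in> hom X D (R D)" using rho_hom Qo Do by auto
  obtain \<sigma> where \<sigma>: "\<sigma> \<in> hom X (R Q) Q" "cp X \<sigma> (\<rho> Q) = idm X Q" "cp X (\<rho> Q) \<sigma> = idm X (R Q)"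
    using iso_inv[OF rho_iso[OF assms(1)] rQ] by blast
  obtain \<tau> where \<tau>: "\<tau> \<in> hom X (R D) D" "cp X \<tau> (\<rho> D) = idm X D" "cp X (\<rho> D) \<tau> = idm X (R D)"
    using iso_inv[OF rho_iso[OF DP] rD] by blast
  have Rd: "Rm \<delta> \<in> hom X (R D) (R Q)" "cp X (Rm \<delta>) (\<rho> D) = cp X (\<rho> Q) \<delta>" using Rmor_spec[OF dl] by auto
  have "cp X \<sigma> (Rm \<delta>) = cp X \<sigma> (cp X (Rm \<delta>) (cp X (\<rho> D) \<tau>))" using \<tau>(3) Rd(1) by simp
  also have "\<dots> = cp X \<sigma> (cp X (cp X (Rm \<delta>) (\<rho> D)) \<tau>)" using X.assoc[OF \<tau>(1) rD Rd(1)] by simp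
  also have "\<dots> = cp X \<sigma> (cp X (cp X (\<rho> Q) \<delta>) \<tau>)" using Rd(2) by simp
  also have "\<dots> = cp X \<sigma> (cp X (\<rho> Q) (cp X \<delta> \<tau>))" using X.assoc[OF \<tau>(1) dl rQ] by simp
  also have "\<dots> = cp X (cp X \<sigma> (\<rho> Q)) (cp X \<delta> \<tau>)" using X.assoc[OF _ rQ \<sigma>(1), of "cp X \<delta> \<tau>"] \<tau>(1) dl by blast
  also have "\<dots> = cp X \<delta> \<tau>" using \<sigma>(2) X.id_l[OF X.comp_hom[OF \<tau>(1) dl]] by simp
  finally have e1: "cp X \<sigma> (Rm \<delta>) = cp X \<delta> \<tau>" .
  have \<sigma>A: "\<sigma> \<in> hom A (R Q) Q" using \<sigma>(1) RQ assms(1) by (simp add: homA)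
  have nA: "n \<in> hom A (dm X n) (R Q)" and fnA: "fn \<in> hom A (R D) (dm X n)" using s RQ by (auto simp: homA)
  obtain k3 f3 n3 where F3: "f3 \<in> F" "n3 \<in> N" "f3 \<in> hom A (dm X n) k3" "n3 \<in> hom A k3 Q"
     "cp X \<sigma> n = cp X n3 f3"
    using A.factor[OF A.comp_hom[OF nA \<sigma>A]] by blast
  have f3fn: "cp X f3 fn \<in> F" "cp X f3 fn \<in> hom A (R D) k3"
    using A.E_comp[OF s(2) F3(1) fnA F3(3)] A.comp_hom[OF fnA F3(3)] by auto
  have "cp X n3 (cp X f3 fn) = cp X (cp X n3 f3) fn" using A.assoc[OF fnA F3(3) F3(4)] .
  also have "\<dots> = cp X (cp X \<sigma> n) fn" using F3(5) by simp
  also have "\<dots> = cp X \<sigma> (Rm \<delta>)" using A.assoc[OF fnA nA \<sigma>A] s(6) by simp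
  finally have e2: "cp X n3 (cp X f3 fn) = cp X \<delta> \<tau>" using e1 by simp
  have \<tau>A: "\<tau> \<in> hom A (R D) D" using \<tau>(1) RQ DP by (simp add: homA)
  obtain t3 where t3: "t3 \<in> hom A k3 D" "n3 = cp X \<delta> t3"
    using A.img_le[OF f3fn(1) F3(2) f3fn(2) F3(4) assms(2) dlA \<tau>A e2] by blast
  have le3: "sub_le X n3 \<delta>" using t3 F3(4) dl by (auto simp: sub_le_def hom_def homA)
  have cdn3: "cd X n3 = Q" using F3(4) by (simp add: hom_def)
  have cdn: "cd X n = R Q" using s(4) by (simp add: hom_def)
  define cn where "cn = c (R Q) n"
  have cn: "cn \<in> N" "cn \<in> hom X (dm X cn) (R Q)" "dm X cn \<in> P"
    using c_N[OF RQ(1) s(1) cdn] unfolding cn_def by auto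
  have cnA: "cn \<in> hom A (dm X cn) (R Q)" using cn RQ by (simp add: homA)
  obtain k4 f4 n4 where F4: "f4 \<in> F" "n4 \<in> N" "f4 \<in> hom A (dm X cn) k4" "n4 \<in> hom A k4 Q"
     "cp X \<sigma> cn = cp X n4 f4"
    using A.factor[OF A.comp_hom[OF cnA \<sigma>A]] by blast
  have le4: "sub_le X n4 (c Q n3)"
    by (rule c_cont[OF RQ(1) s(1) cdn \<sigma>(1) assms(1) F4(2) F4(1) _ F4(5)[unfolded cn_def] F3(2) F3(1) _ F3(5)])
       (use F3 F4 in \<open>auto simp: hom_def\<close>)
  have le5: "sub_le X (c Q n3) (c Q \<delta>)" by (rule c_mono[OF assms(1) F3(2) cdn3 assms(2,3) le3])
  have cd\<delta>: "c Q \<delta> \<in> hom X (dm X (c Q \<delta>)) Q" using c_N[OF assms] by blast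
  have le6: "sub_le X n4 (c Q \<delta>)" using sub_le_trans[OF le4 le5] cd\<delta> by (auto simp: hom_def)
  have n4X: "n4 \<in> hom X k4 Q" using F4(4) by (simp add: homA)
  have f4X: "f4 \<in> hom X (dm X cn) k4" using F4(3) by (simp add: homA)
  obtain t4 where t4: "t4 \<in> hom X k4 (dm X (c Q \<delta>))" "n4 = cp X (c Q \<delta>) t4"
    using X.sub_leE[OF le6 n4X cd\<delta>] .
  note Dp = X.pullbackD[OF s(7)]
  define P0 where "P0 = dm X (d Q \<delta>)"
  have rx: "dm X (\<rho> Q) = Q" using rQ by (simp add: hom_def)
  have dQ: "d Q \<delta> \<in> hom X P0 Q" using Dp(3) rx unfolding P0_def by simp
  have qh: "q \<in> hom X P0 (dm X cn)" using Dp(4) unfolding P0_def cn_def .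
  have "cn = cp X (cp X (\<rho> Q) \<sigma>) cn" using \<sigma>(3) cn(2) by simp
  also have "\<dots> = cp X (\<rho> Q) (cp X n4 f4)" using X.assoc[OF cn(2) \<sigma>(1) rQ] F4(5) by simp
  also have "\<dots> = cp X (\<rho> Q) (cp X (c Q \<delta>) (cp X t4 f4))" using X.assoc[OF f4X t4(1) cd\<delta>] t4(2) by simp
  finally have e3: "cn = cp X (\<rho> Q) (cp X (c Q \<delta>) (cp X t4 f4))" .
  have w: "cp X (c Q \<delta>) (cp X t4 f4) \<in> hom X (dm X cn) Q" using f4X t4(1) cd\<delta> by blast
  have "cp X (\<rho> Q) (d Q \<delta>) = cp X cn q" using Dp(5) unfolding cn_def .
  also have "\<dots> = cp X (\<rho> Q) (cp X (cp X (c Q \<delta>) (cp X t4 f4)) q)"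
    using e3 X.assoc[OF qh w rQ] by simp
  finally have e4: "cp X (\<rho> Q) (d Q \<delta>) = cp X (\<rho> Q) (cp X (cp X (c Q \<delta>) (cp X t4 f4)) q)" .
  have w2: "cp X (cp X (c Q \<delta>) (cp X t4 f4)) q \<in> hom X P0 Q" using qh w by blast
  have "d Q \<delta> = cp X (cp X (c Q \<delta>) (cp X t4 f4)) q"
    using X.monoD[OF X.iso_mono[OF rho_iso[OF assms(1)] rQ] rQ dQ w2 e4] .
  also have "\<dots> = cp X (c Q \<delta>) (cp X (cp X t4 f4) q)"
  proof -
    have "cp X t4 f4 \<in> hom X (dm X cn) (dm X (c Q \<delta>))" using f4X t4(1) by blast
    then show ?thesis using X.assoc[OF qh _ cd\<delta>] by simp
  qed
  finally have "d Q \<delta> = cp X (c Q \<delta>) (cp X (cp X t4 f4) q)" .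
  moreover have "cp X (cp X t4 f4) q \<in> hom X P0 (dm X (c Q \<delta>))" using qh f4X t4(1) by blast
  ultimately show ?thesis using dQ cd\<delta> unfolding P0_def by (auto simp: sub_le_def hom_def)
qed

lemma d_iso: assumes "x \<in> ob X" "m \<in> hom X y x" "s \<in> hom X (R x) (R y)" "cp X (Rm m) s = idm X (R x)"
  shows "iso X (d x m)"
proof -
  obtain n fn q where sp: "n \<in> N" "fn \<in> F" "fn \<in> hom X (R y) (dm X n)" "n \<in> hom X (dm X n) (R x)"
    "dm X n \<in> P" "Rm m = cp X n fn" "is_pullback X (\<rho> x) (c (R x) n) (d x m) q"
    using d_spec[OF assms(1,2)] by blast
  have Rx: "R x \<in> P" using R_ob(2)[OF assms(1)] .
  have cdn: "cd X n = R x" using sp(4) by (simp add: hom_def)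
  have fs: "cp X fn s \<in> hom X (R x) (dm X n)" using assms(3) sp(3) by blast
  have e: "cp X n (cp X fn s) = idm X (R x)" using X.assoc[OF assms(3) sp(3) sp(4)] sp(6) assms(4) by simp
  have cn: "c (R x) n \<in> N" "c (R x) n \<in> hom X (dm X (c (R x) n)) (R x)" using c_N[OF Rx sp(1) cdn] by auto
  obtain j where j: "j \<in> hom X (dm X n) (dm X (c (R x) n))" "n = cp X (c (R x) n) j"
    using X.sub_leE[OF c_ext[OF Rx sp(1) cdn] sp(4) cn(2)] .
  have "cp X (c (R x) n) (cp X j (cp X fn s)) = idm X (R x)"
    using X.assoc[OF fs j(1) cn(2)] j(2) e by simp
  then have "iso X (c (R x) n)"
    using X.mono_split_epi_iso[OF X.M_mono cn(2)] cn(1) NM j(1) fs by blast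
  then show ?thesis using X.pullback_iso[OF sp(7)] by blast
qed

end

context category
begin

lemma pullback_intro:
  assumes "f \<in> hom C a z" "g \<in> hom C b z" "p \<in> hom C pp a" "q \<in> hom C pp b" "cp C f p = cp C g q"
    and ex: "\<And>t u v. u \<in> hom C t a \<Longrightarrow> v \<in> hom C t b \<Longrightarrow> cp C f u = cp C g v \<Longrightarrow>
          \<exists>h. h \<in> hom C t pp \<and> cp C p h = u \<and> cp C q h = v"
    and un: "\<And>t h h'. h \<in> hom C t pp \<Longrightarrow> h' \<in> hom C t pp \<Longrightarrow> cp C p h = cp C p h' \<Longrightarrow> cp C q h = cp C q h' \<Longrightarrow> h = h'"
  shows "is_pullback C f g p q"
  unfolding is_pullback_def
proof (intro conjI allI impI)
  show "f \<in> ar C" "g \<in> ar C" "p \<in> ar C" "q \<in> ar C" "cd C f = cd C g" "cd C p = dm C f" "cd C q = dm C g"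
    "dm C p = dm C q" "cp C f p = cp C g q"
    using assms(1-5) by (auto simp: hom_def)
  fix u v assume uv: "u \<in> ar C" "v \<in> ar C" "cd C u = dm C f" "cd C v = dm C g" "dm C u = dm C v" "cp C f u = cp C g v"
  have uh: "u \<in> hom C (dm C u) a" "v \<in> hom C (dm C u) b" using uv assms(1,2) by (auto simp: hom_def)
  obtain h where h: "h \<in> hom C (dm C u) pp" "cp C p h = u" "cp C q h = v" using ex[OF uh uv(6)] by blast
  have dp: "dm C p = pp" using assms(3) by (simp add: hom_def)
  show "\<exists>!h. h \<in> ar C \<and> dm C h = dm C u \<and> cd C h = dm C p \<and> cp C p h = u \<and> cp C q h = v"
  proof (rule ex1I[of _ h])
    show "h \<in> ar C \<and> dm C h = dm C u \<and> cd C h = dm C p \<and> cp C p h = u \<and> cp C q h = v"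
      using h dp by (auto simp: hom_def)
    fix h' assume "h' \<in> ar C \<and> dm C h' = dm C u \<and> cd C h' = dm C p \<and> cp C p h' = u \<and> cp C q h' = v"
    then show "h' = h" using un[OF _ h(1), of h'] h dp by (auto simp: hom_def)
  qed
qed

lemma pullback_sym: assumes "is_pullback C f g p q" shows "is_pullback C g f q p"
proof -
  note D = pullbackD[OF assms]
  have dq: "dm C q = dm C p" using D(4) by (simp add: hom_def)
  show ?thesis
  proof (rule pullback_intro[OF D(2) D(1) D(4) D(3) D(5)[symmetric]])
    fix t u v assume a: "u \<in> hom C t (dm C g)" "v \<in> hom C t (dm C f)" "cp C g u = cp C f v"
    obtain h where "h \<in> hom C t (dm C p)" "cp C p h = v" "cp C q h = u"
      using pullback_univ[OF assms a(2) a(1) a(3)[symmetric]] by blast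
    then show "\<exists>h. h \<in> hom C t (dm C p) \<and> cp C q h = u \<and> cp C p h = v" by blast
  next
    fix t h h' assume "h \<in> hom C t (dm C p)" "h' \<in> hom C t (dm C p)" "cp C q h = cp C q h'" "cp C p h = cp C p h'"
    then show "h = h'" using pullback_uniq[OF assms] by blast
  qed
qed

end

context setting
begin

lemma product_pullback:
  assumes pq: "is_product X Y Z q1 q2" and pp: "is_product X x Z p1 p2"
    and e: "e \<in> hom X x Y" and g: "g \<in> hom X (dm X p1) (dm X q1)"
    and g1: "cp X q1 g = cp X e p1" and g2: "cp X q2 g = p2"
  shows "is_pullback X q1 e g p1"
proof -
  note Q = X.productD[OF pq] and Pp = X.productD[OF pp]
  show ?thesis
  proof (rule X.pullback_intro[OF Q(1) e g Pp(1) g1])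
    fix t u v assume a: "u \<in> hom X t (dm X q1)" "v \<in> hom X t x" "cp X q1 u = cp X e v"
    have v2: "cp X q2 u \<in> hom X t Z" using a(1) Q(2) by blast
    obtain h where h: "h \<in> hom X t (dm X p1)" "cp X p1 h = v" "cp X p2 h = cp X q2 u"
      using X.product_univ[OF pp a(2) v2] by blast
    have gh: "cp X g h \<in> hom X t (dm X q1)" using h(1) g by blast
    have "cp X g h = u"
    proof (rule X.product_uniq[OF pq gh a(1)])
      show "cp X q1 (cp X g h) = cp X q1 u"
        using X.assoc[OF h(1) g Q(1)] g1 X.assoc[OF h(1) Pp(1) e] h(2) a(3) by simp
      show "cp X q2 (cp X g h) = cp X q2 u"
        using X.assoc[OF h(1) g Q(2)] g2 h(3) by simp
    qed
    then show "\<exists>h. h \<in> hom X t (dm X p1) \<and> cp X g h = u \<and> cp X p1 h = v" using h by blast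
  next
    fix t h h' assume a: "h \<in> hom X t (dm X p1)" "h' \<in> hom X t (dm X p1)" "cp X g h = cp X g h'" "cp X p1 h = cp X p1 h'"
    have "cp X p2 h = cp X p2 h'"
      using X.assoc[OF a(1) g Q(2)] X.assoc[OF a(2) g Q(2)] g2 a(3) by simp
    then show "h = h'" using X.product_uniq[OF pp a(1,2) a(4)] by blast
  qed
qed

lemma compact_E:
  assumes cpt: "compact X E M d x" and eE: "e \<in> E" and e: "e \<in> hom X x Y"
  shows "compact X E M d Y"
  unfolding compact_def
proof (intro conjI ballI allI impI)
  show Yo: "Y \<in> ob X" using X.hom_ob(2)[OF e] .
  have xo: "x \<in> ob X" using X.hom_ob(1)[OF e] .
  fix Z q1 q2 assume Zo: "Z \<in> ob X" and pq: "is_product X Y Z q1 q2"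
  note Q = X.productD[OF pq]
  define W where "W = dm X q1"
  have q1: "q1 \<in> hom X W Y" and q2: "q2 \<in> hom X W Z" using Q unfolding W_def by auto
  have dq2: "dm X q2 = W" "cd X q2 = Z" using q2 by (auto simp: hom_def)
  obtain p1 p2 where pp: "is_product X x Z p1 p2" using X.fc_product[OF fcX xo Zo] by blast
  note Pp = X.productD[OF pp]
  define V where "V = dm X p1"
  have p1: "p1 \<in> hom X V x" and p2: "p2 \<in> hom X V Z" using Pp unfolding V_def by auto
  have dp2: "dm X p2 = V" "cd X p2 = Z" using p2 by (auto simp: hom_def)
  obtain g where g: "g \<in> hom X V W" "cp X q1 g = cp X e p1" "cp X q2 g = p2"
    using X.product_univ[OF pq X.comp_hom[OF p1 e] p2] unfolding V_def W_def by blast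
  have gpb: "is_pullback X q1 e g p1" using product_pullback[OF pq pp e] g unfolding V_def W_def by blast
  have gE: "g \<in> E" using Estable gpb eE unfolding stable_under_pullback_def by blast
  have cpt2: "preserving X E M d p2" using cpt Zo pp unfolding compact_def by blast
  show "preserving X E M d q2"
    unfolding preserving_def dq2
  proof (intro ballI allI impI)
    fix n n1 n2 assume n: "n \<in> sub X M W" and i1: "is_image X E M q2 (d W n) n1"
      and i2: "is_image X E M q2 n n2"
    have nM: "n \<in> M" and nh: "n \<in> hom X (dm X n) W" using n X.M_ar by (auto simp: sub_def hom_def)
    obtain e1 where e1: "n1 \<in> M" "e1 \<in> E" "cd X e1 = dm X n1" "cp X q2 (d W n) = cp X n1 e1"
      using i1 unfolding is_image_def by blast
    obtain e2 where e2: "n2 \<in> M" "e2 \<in> E" "cd X e2 = dm X n2" "cp X q2 n = cp X n2 e2"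
      using i2 unfolding is_image_def by blast
    have Wo: "W \<in> ob X" using X.hom_ob(1)[OF q1] .
    have dWn: "d W n \<in> M" "d W n \<in> hom X (dm X (d W n)) W" using d_hom[OF Wo nh] by auto
    have qn: "cp X q2 n \<in> hom X (dm X n) Z" using nh q2 by blast
    have e2h: "e2 \<in> hom X (dm X n) (dm X n2)" and n2h: "n2 \<in> hom X (dm X n2) Z"
    proof -
      have "cp X n2 e2 \<in> hom X (dm X e2) (cd X n2)"
        using X.ar_hom X.comp_hom e2 X.E_ar X.M_ar by metis
      then show "e2 \<in> hom X (dm X n) (dm X n2)" "n2 \<in> hom X (dm X n2) Z"
        using qn e2 X.E_ar X.M_ar by (auto simp: hom_def)
    qed
    have qdn: "cp X q2 (d W n) \<in> hom X (dm X (d W n)) Z" using dWn(2) q2 by blast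
    have e1h: "e1 \<in> hom X (dm X (d W n)) (dm X n1)" and n1h: "n1 \<in> hom X (dm X n1) Z"
    proof -
      have "cp X n1 e1 \<in> hom X (dm X e1) (cd X n1)"
        using X.ar_hom X.comp_hom e1 X.E_ar X.M_ar by metis
      then show "e1 \<in> hom X (dm X (d W n)) (dm X n1)" "n1 \<in> hom X (dm X n1) Z"
        using qdn e1 X.E_ar X.M_ar by (auto simp: hom_def)
    qed
    have dZ: "d Z n2 \<in> M" "d Z n2 \<in> hom X (dm X (d Z n2)) Z" using d_hom[OF Zo n2h] by auto
    have le1: "sub_le X (cp X q2 (d W n)) (d Z n2)"
      by (rule d_cont[OF Wo q2 nh e2(2) e2(1) e2h n2h e2(4)])
    obtain j where j: "j \<in> hom X (dm X (d W n)) (dm X (d Z n2))" "cp X q2 (d W n) = cp X (d Z n2) j"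
      using X.sub_leE[OF le1 qdn dZ(2)] .
    obtain t where t: "t \<in> hom X (dm X n1) (dm X (d Z n2))" "n1 = cp X (d Z n2) t"
      using X.img_le[OF e1(2) e1(1) e1h n1h dZ(1) dZ(2) j(1)] e1(4) j(2) by metis
    have A1: "sub_le X n1 (d Z n2)" using t n1h dZ(2) by (auto simp: sub_le_def hom_def)
    obtain k k' where kp: "is_pullback X g n k k'" using X.fc_pullback[OF fcX g(1) nh] by blast
    note K = X.pullbackD[OF kp]
    have kM: "k \<in> M" using X.pullback_M[OF kp nM] .
    have k'E: "k' \<in> E" using Estable X.pullback_sym[OF kp] gE unfolding stable_under_pullback_def by blast
    define U where "U = dm X k"
    have kh: "k \<in> hom X U V" and k'h: "k' \<in> hom X U (dm X n)"
      using K g(1) nh unfolding U_def by (auto simp: hom_def)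
    have kS: "k \<in> sub X M V" using kM kh by (auto simp: sub_def hom_def)
    have p2k: "cp X p2 k = cp X n2 (cp X e2 k')"
    proof -
      have "cp X p2 k = cp X (cp X q2 g) k" using g(3) by simp
      also have "\<dots> = cp X q2 (cp X g k)" using X.assoc[OF kh g(1) q2] by simp
      also have "\<dots> = cp X q2 (cp X n k')" using K(5) by simp
      also have "\<dots> = cp X (cp X n2 e2) k'" using X.assoc[OF k'h nh q2] e2(4) by simp
      also have "\<dots> = cp X n2 (cp X e2 k')" using X.assoc[OF k'h e2h n2h] by simp
      finally show ?thesis .
    qed
    have ek: "cp X e2 k' \<in> E" "cp X e2 k' \<in> hom X U (dm X n2)"
      using X.E_comp[OF k'E e2(2) k'h e2h] k'h e2h by auto
    have i2': "is_image X E M p2 k n2" unfolding is_image_def using e2(1) ek p2k by (auto simp: hom_def)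
    have Vo: "V \<in> ob X" using X.hom_ob(1)[OF p1] .
    have dVk: "d V k \<in> hom X (dm X (d V k)) V" using d_hom[OF Vo kh] by auto
    have pdk: "cp X p2 (d V k) \<in> hom X (dm X (d V k)) Z" using dVk p2 by blast
    obtain kk e1' n1' where F1: "e1' \<in> E" "n1' \<in> M" "e1' \<in> hom X (dm X (d V k)) kk" "n1' \<in> hom X kk Z"
      "cp X p2 (d V k) = cp X n1' e1'"
      using X.factor[OF pdk] by blast
    have i1': "is_image X E M p2 (d V k) n1'" unfolding is_image_def using F1 by (auto simp: hom_def)
    have se: "sub_eq X n1' (d Z n2)"
      using cpt2 kS i1' i2' unfolding preserving_def dp2 by blast
    have le2: "sub_le X (cp X g (d V k)) (d W n)"
      by (rule d_cont[OF Vo g(1) kh k'E nM k'h nh K(5)])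
    obtain h where h: "h \<in> hom X (dm X (d V k)) (dm X (d W n))" "cp X g (d V k) = cp X (d W n) h"
      using X.sub_leE[OF le2 X.comp_hom[OF dVk g(1)] dWn(2)] .
    have "cp X p2 (d V k) = cp X (cp X q2 g) (d V k)" using g(3) by simp
    also have "\<dots> = cp X q2 (cp X (d W n) h)" using X.assoc[OF dVk g(1) q2] h(2) by simp
    also have "\<dots> = cp X (cp X n1 e1) h" using X.assoc[OF h(1) dWn(2) q2] e1(4) by simp
    also have "\<dots> = cp X n1 (cp X e1 h)" using X.assoc[OF h(1) e1h n1h] by simp
    finally have eq: "cp X n1' e1' = cp X n1 (cp X e1 h)" using F1(5) by simp
    obtain t' where t': "t' \<in> hom X kk (dm X n1)" "n1' = cp X n1 t'"
      using X.img_le[OF F1(1) F1(2) F1(3) F1(4) e1(1) n1h X.comp_hom[OF h(1) e1h] eq] by blast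
    have le3: "sub_le X n1' n1" using t' F1(4) n1h by (auto simp: sub_le_def hom_def)
    have A2: "sub_le X (d Z n2) n1"
      using sub_le_trans[of "d Z n2" n1' n1] se le3 n1h unfolding sub_eq_def by (auto simp: hom_def)
    show "sub_eq X n1 (d Z n2)" using A1 A2 unfolding sub_eq_def by blast
  qed
qed

end

context category
begin

lemma product_intro:
  assumes "p1 \<in> hom C pp a" "p2 \<in> hom C pp b"
    and ex: "\<And>t u v. u \<in> hom C t a \<Longrightarrow> v \<in> hom C t b \<Longrightarrow>
          \<exists>h. h \<in> hom C t pp \<and> cp C p1 h = u \<and> cp C p2 h = v"
    and un: "\<And>t h h'. h \<in> hom C t pp \<Longrightarrow> h' \<in> hom C t pp \<Longrightarrow> cp C p1 h = cp C p1 h' \<Longrightarrow> cp C p2 h = cp C p2 h' \<Longrightarrow> h = h'"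
  shows "is_product C a b p1 p2"
  unfolding is_product_def
proof (intro conjI allI impI)
  show "p1 \<in> ar C" "p2 \<in> ar C" "dm C p1 = dm C p2" "cd C p1 = a" "cd C p2 = b"
    using assms(1,2) by (auto simp: hom_def)
  fix u v assume uv: "u \<in> ar C" "v \<in> ar C" "dm C u = dm C v" "cd C u = a" "cd C v = b"
  have uh: "u \<in> hom C (dm C u) a" "v \<in> hom C (dm C u) b" using uv by (auto simp: hom_def)
  obtain h where h: "h \<in> hom C (dm C u) pp" "cp C p1 h = u" "cp C p2 h = v" using ex[OF uh] by blast
  have dp: "dm C p1 = pp" using assms(1) by (simp add: hom_def)
  show "\<exists>!h. h \<in> ar C \<and> dm C h = dm C u \<and> cd C h = dm C p1 \<and> cp C p1 h = u \<and> cp C p2 h = v"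
  proof (rule ex1I[of _ h])
    show "h \<in> ar C \<and> dm C h = dm C u \<and> cd C h = dm C p1 \<and> cp C p1 h = u \<and> cp C p2 h = v"
      using h dp by (auto simp: hom_def)
    fix h' assume "h' \<in> ar C \<and> dm C h' = dm C u \<and> cd C h' = dm C p1 \<and> cp C p1 h' = u \<and> cp C p2 h' = v"
    then show "h' = h" using un[OF _ h(1), of h'] h dp by (auto simp: hom_def)
  qed
qed

end

context setting
begin

lemma prodA_X:
  assumes "a \<in> P" "b \<in> P" "is_product A a b p1 p2"
  shows "is_product X a b p1 p2"
proof -
  note PA = A.productD[OF assms(3)]
  define Qp where "Qp = dm X p1"
  have QP: "Qp \<in> P" using PA unfolding Qp_def by (auto simp: hom_def)
  have p1: "p1 \<in> hom X Qp a" and p2: "p2 \<in> hom X Qp b" using PA unfolding Qp_def by (auto simp: homA)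
  show ?thesis
  proof (rule X.product_intro[OF p1 p2])
    fix t u v assume uv: "u \<in> hom X t a" "v \<in> hom X t b"
    have to: "t \<in> ob X" using X.hom_ob(1)[OF uv(1)] .
    have Rt: "R t \<in> P" using R_ob(2)[OF to] .
    obtain u' where u': "u' \<in> hom X (R t) a" "cp X u' (\<rho> t) = u" using refl_univ[OF to assms(1) uv(1)] by blast
    obtain v' where v': "v' \<in> hom X (R t) b" "cp X v' (\<rho> t) = v" using refl_univ[OF to assms(2) uv(2)] by blast
    have "u' \<in> hom A (R t) a" "v' \<in> hom A (R t) b" using u' v' Rt assms by (auto simp: homA)
    then obtain h' where h': "h' \<in> hom A (R t) (dm X p1)" "cp X p1 h' = u'" "cp X p2 h' = v'"
      using A.product_univ[OF assms(3)] by metis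
    have h'X: "h' \<in> hom X (R t) Qp" using h'(1) unfolding Qp_def by (simp add: homA)
    have "cp X h' (\<rho> t) \<in> hom X t Qp" using h'X rho_hom[OF to] by blast
    moreover have "cp X p1 (cp X h' (\<rho> t)) = u" using X.assoc[OF rho_hom[OF to] h'X p1] h'(2) u'(2) by simp
    moreover have "cp X p2 (cp X h' (\<rho> t)) = v" using X.assoc[OF rho_hom[OF to] h'X p2] h'(3) v'(2) by simp
    ultimately show "\<exists>h. h \<in> hom X t Qp \<and> cp X p1 h = u \<and> cp X p2 h = v" by blast
  next
    fix t h1 h2 assume hh: "h1 \<in> hom X t Qp" "h2 \<in> hom X t Qp" "cp X p1 h1 = cp X p1 h2" "cp X p2 h1 = cp X p2 h2"
    have to: "t \<in> ob X" using X.hom_ob(1)[OF hh(1)] .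
    have Rt: "R t \<in> P" using R_ob(2)[OF to] .
    obtain h1' where h1': "h1' \<in> hom X (R t) Qp" "cp X h1' (\<rho> t) = h1" using refl_univ[OF to QP hh(1)] by blast
    obtain h2' where h2': "h2' \<in> hom X (R t) Qp" "cp X h2' (\<rho> t) = h2" using refl_univ[OF to QP hh(2)] by blast
    have rt: "\<rho> t \<in> hom X t (R t)" using rho_hom[OF to] .
    have e1: "cp X p1 h1' = cp X p1 h2'"
    proof (rule refl_uniq[OF to assms(1)])
      show "cp X p1 h1' \<in> hom X (R t) a" "cp X p1 h2' \<in> hom X (R t) a" using h1' h2' p1 by blast+
      show "cp X (cp X p1 h1') (\<rho> t) = cp X (cp X p1 h2') (\<rho> t)"
        using X.assoc[OF rt h1'(1) p1] X.assoc[OF rt h2'(1) p1] h1'(2) h2'(2) hh(3) by simp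
    qed
    have e2: "cp X p2 h1' = cp X p2 h2'"
    proof (rule refl_uniq[OF to assms(2)])
      show "cp X p2 h1' \<in> hom X (R t) b" "cp X p2 h2' \<in> hom X (R t) b" using h1' h2' p2 by blast+
      show "cp X (cp X p2 h1') (\<rho> t) = cp X (cp X p2 h2') (\<rho> t)"
        using X.assoc[OF rt h1'(1) p2] X.assoc[OF rt h2'(1) p2] h1'(2) h2'(2) hh(4) by simp
    qed
    have "h1' \<in> hom A (R t) (dm X p1)" "h2' \<in> hom A (R t) (dm X p1)" using h1' h2' Rt QP unfolding Qp_def
      by (auto simp: homA)
    then have "h1' = h2'" using A.product_uniq[OF assms(3)] e1 e2 by blast
    then show "h1 = h2" using h1'(2) h2'(2) by simp
  qed
qed

lemma rho_E:
  assumes cpt: "compact X E M d x" and xo: "x \<in> ob X"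
    and fact: "e \<in> E" "m \<in> M" "cd X e = dm X m" "\<rho> x = cp X m e"
    and sep: "separated A c (R x)"
  shows "\<rho> x \<in> E"
proof -
  define Y where "Y = cd X e"
  have Rx: "R x \<in> P" "R x \<in> ob X" using R_ob xo by auto
  have rx: "\<rho> x \<in> hom X x (R x)" using rho_hom[OF xo] .
  have eh: "e \<in> hom X x Y" and mh: "m \<in> hom X Y (R x)"
  proof -
    have "cp X m e \<in> hom X (dm X e) (cd X m)" using X.ar_hom X.comp_hom fact X.E_ar X.M_ar by metis
    then show "e \<in> hom X x Y" "m \<in> hom X Y (R x)" using rx fact X.E_ar X.M_ar unfolding Y_def by (auto simp: hom_def)
  qed
  have Yo: "Y \<in> ob X" using X.hom_ob(2)[OF eh] .
  have RxA: "R x \<in> ob A" using Rx by simp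
  obtain \<pi>1 \<pi>2 where pA: "is_product A (R x) (R x) \<pi>1 \<pi>2" using A.fc_product[OF fcA RxA RxA] by blast
  note PA = A.productD[OF pA]
  define Qd where "Qd = dm X \<pi>1"
  have QdP: "Qd \<in> P" and Qdo: "Qd \<in> ob X" using PA subA unfolding Qd_def by (auto simp: hom_def)
  have pX: "is_product X (R x) (R x) \<pi>1 \<pi>2" using prodA_X[OF Rx(1) Rx(1) pA] .
  have \<pi>1: "\<pi>1 \<in> hom X Qd (R x)" and \<pi>2: "\<pi>2 \<in> hom X Qd (R x)" using PA unfolding Qd_def by (auto simp: homA)
  have idA: "idm X (R x) \<in> hom A (R x) (R x)" using X.id_hom[OF Rx(2)] Rx by (simp add: homA)
  obtain \<delta> where \<delta>A: "\<delta> \<in> hom A (R x) (dm X \<pi>1)" "cp X \<pi>1 \<delta> = idm X (R x)" "cp X \<pi>2 \<delta> = idm X (R x)"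
    using A.product_univ[OF pA idA idA] by metis
  have \<delta>: "\<delta> \<in> hom X (R x) Qd" using \<delta>A(1) unfolding Qd_def by (simp add: homA)
  have "is_closed A c \<delta>"
    using sep pA \<delta>A unfolding separated_def by (auto simp: hom_def)
  then have "sub_le A (c Qd \<delta>) \<delta>" using \<delta> unfolding is_closed_def sub_eq_def by (auto simp: hom_def)
  moreover have \<delta>N: "\<delta> \<in> N"
    using A.split_mono_M[OF \<delta>A(1)] PA \<delta>A(2) by blast
  moreover have cd\<delta>: "cd X \<delta> = Qd" using \<delta> by (simp add: hom_def)
  ultimately have le0: "sub_le X (c Qd \<delta>) \<delta>" using subA_le A.M_ar c_N(1)[OF QdP] by blast
  have le1: "sub_le X (d Qd \<delta>) \<delta>"
    using sub_le_trans[OF d_le_c[OF QdP \<delta>N cd\<delta>] le0] \<delta> by (auto simp: hom_def)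
  obtain p1 p2 where pp: "is_product X x (R x) p1 p2" using X.fc_product[OF fcX xo Rx(2)] by blast
  note Pp = X.productD[OF pp]
  define V where "V = dm X p1"
  have p1: "p1 \<in> hom X V x" and p2: "p2 \<in> hom X V (R x)" using Pp unfolding V_def by auto
  have Vo: "V \<in> ob X" using X.hom_ob(1)[OF p1] .
  obtain \<gamma> where \<gamma>: "\<gamma> \<in> hom X x V" "cp X p1 \<gamma> = idm X x" "cp X p2 \<gamma> = \<rho> x"
    using X.product_univ[OF pp X.id_hom[OF xo] rx] unfolding V_def by metis
  have \<gamma>M: "\<gamma> \<in> M" using X.split_mono_M[OF \<gamma>(1) p1 \<gamma>(2)] .
  have rp1: "cp X (\<rho> x) p1 \<in> hom X V (R x)" using p1 rx by blast
  obtain G where G: "G \<in> hom X V Qd" "cp X \<pi>1 G = cp X (\<rho> x) p1" "cp X \<pi>2 G = p2"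
    using X.product_univ[OF pX rp1 p2] unfolding Qd_def by metis
  have G\<gamma>: "cp X G \<gamma> = cp X \<delta> (\<rho> x)"
  proof (rule X.product_uniq[OF pX])
    show "cp X G \<gamma> \<in> hom X x (dm X \<pi>1)" "cp X \<delta> (\<rho> x) \<in> hom X x (dm X \<pi>1)"
      using G(1) \<gamma>(1) \<delta> rx unfolding Qd_def by blast+
    have "cp X \<pi>1 (cp X G \<gamma>) = cp X (cp X (\<rho> x) p1) \<gamma>" using X.assoc[OF \<gamma>(1) G(1) \<pi>1] G(2) by simp
    also have "\<dots> = \<rho> x" using X.assoc[OF \<gamma>(1) p1 rx] \<gamma>(2) rx by simp
    also have "\<dots> = cp X \<pi>1 (cp X \<delta> (\<rho> x))" using X.assoc[OF rx \<delta> \<pi>1] \<delta>A(2) rx by simp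
    finally show "cp X \<pi>1 (cp X G \<gamma>) = cp X \<pi>1 (cp X \<delta> (\<rho> x))" .
    have "cp X \<pi>2 (cp X G \<gamma>) = \<rho> x" using X.assoc[OF \<gamma>(1) G(1) \<pi>2] G(3) \<gamma>(3) by simp
    also have "\<dots> = cp X \<pi>2 (cp X \<delta> (\<rho> x))" using X.assoc[OF rx \<delta> \<pi>2] \<delta>A(3) rx by simp
    finally show "cp X \<pi>2 (cp X G \<gamma>) = cp X \<pi>2 (cp X \<delta> (\<rho> x))" .
  qed
  have gpb: "is_pullback X G \<delta> \<gamma> (\<rho> x)"
  proof (rule X.pullback_intro[OF G(1) \<delta> \<gamma>(1) rx G\<gamma>])
    fix t u v assume a: "u \<in> hom X t V" "v \<in> hom X t (R x)" "cp X G u = cp X \<delta> v"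
    have h: "cp X p1 u \<in> hom X t x" using a(1) p1 by blast
    have e1: "cp X \<pi>1 (cp X G u) = cp X (\<rho> x) (cp X p1 u)"
      using X.assoc[OF a(1) G(1) \<pi>1] G(2) X.assoc[OF a(1) p1 rx] by simp
    have e1': "cp X \<pi>1 (cp X \<delta> v) = v" using X.assoc[OF a(2) \<delta> \<pi>1] \<delta>A(2) a(2) by simp
    have e2: "cp X \<pi>2 (cp X G u) = cp X p2 u" using X.assoc[OF a(1) G(1) \<pi>2] G(3) by simp
    have e2': "cp X \<pi>2 (cp X \<delta> v) = v" using X.assoc[OF a(2) \<delta> \<pi>2] \<delta>A(3) a(2) by simp
    have rv: "cp X (\<rho> x) (cp X p1 u) = v" using e1 e1' a(3) by simp
    have pv: "cp X p2 u = v" using e2 e2' a(3) by simp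
    have "cp X \<gamma> (cp X p1 u) = u"
    proof (rule X.product_uniq[OF pp])
      show "cp X \<gamma> (cp X p1 u) \<in> hom X t (dm X p1)" "u \<in> hom X t (dm X p1)"
        using h \<gamma>(1) a(1) unfolding V_def by blast+
      show "cp X p1 (cp X \<gamma> (cp X p1 u)) = cp X p1 u"
        using X.assoc[OF h \<gamma>(1) p1] \<gamma>(2) h by simp
      show "cp X p2 (cp X \<gamma> (cp X p1 u)) = cp X p2 u"
        using X.assoc[OF h \<gamma>(1) p2] \<gamma>(3) rv pv by simp
    qed
    then show "\<exists>h. h \<in> hom X t x \<and> cp X \<gamma> h = u \<and> cp X (\<rho> x) h = v" using h rv by blast
  next
    fix t h h' assume a: "h \<in> hom X t x" "h' \<in> hom X t x" "cp X \<gamma> h = cp X \<gamma> h'" "cp X (\<rho> x) h = cp X (\<rho> x) h'"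
    show "h = h'" using X.M_cancel[OF \<gamma>M \<gamma>(1) a(1,2,3)] .
  qed
  \<comment> \<open>the graph is closed\<close>
  have dr: "cp X \<delta> (\<rho> x) \<in> hom X x Qd" using rx \<delta> by blast
  obtain k5 e5 n5 where F5: "e5 \<in> E" "n5 \<in> M" "e5 \<in> hom X x k5" "n5 \<in> hom X k5 Qd" "cp X \<delta> (\<rho> x) = cp X n5 e5"
    using X.factor[OF dr] by blast
  have le2: "sub_le X (cp X G (d V \<gamma>)) (d Qd n5)"
    by (rule d_cont[OF Vo G(1) \<gamma>(1) F5(1) F5(2) F5(3) F5(4)]) (use G\<gamma> F5(5) in simp)
  obtain t5 where t5: "t5 \<in> hom X k5 (R x)" "n5 = cp X \<delta> t5"
    using X.img_le[OF F5(1) F5(2) F5(3) F5(4) _ \<delta> rx F5(5)[symmetric]] \<delta>N NM by blast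
  have le3: "sub_le X (d Qd n5) (d Qd \<delta>)" by (rule d_mono[OF Qdo F5(4) \<delta> t5(1) t5(2)])
  have dQ\<delta>: "d Qd \<delta> \<in> hom X (dm X (d Qd \<delta>)) Qd" using d_hom[OF Qdo \<delta>] by auto
  have dQn5: "d Qd n5 \<in> hom X (dm X (d Qd n5)) Qd" using d_hom[OF Qdo F5(4)] by auto
  have dV\<gamma>: "d V \<gamma> \<in> hom X (dm X (d V \<gamma>)) V" using d_hom[OF Vo \<gamma>(1)] by auto
  have le4: "sub_le X (cp X G (d V \<gamma>)) \<delta>"
    using sub_le_trans[OF sub_le_trans[OF le2 le3] le1] \<delta> dQ\<delta> by (auto simp: hom_def)
  obtain w where w: "w \<in> hom X (dm X (d V \<gamma>)) (R x)" "cp X G (d V \<gamma>) = cp X \<delta> w"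
    using X.sub_leE[OF le4 X.comp_hom[OF dV\<gamma> G(1)] \<delta>] .
  obtain h where h: "h \<in> hom X (dm X (d V \<gamma>)) x" "cp X \<gamma> h = d V \<gamma>"
    using X.pullback_univ[OF gpb, of "d V \<gamma>" "dm X (d V \<gamma>)" w] dV\<gamma> w G(1) \<delta> rx \<gamma>(1)
    by (auto simp: hom_def)
  have cpt2: "preserving X E M d p2" using cpt Rx(2) pp unfolding compact_def by blast
  have dp2: "dm X p2 = V" "cd X p2 = R x" using p2 by (auto simp: hom_def)
  have \<gamma>S: "\<gamma> \<in> sub X M V" using \<gamma>M \<gamma>(1) by (auto simp: sub_def hom_def)
  have i2: "is_image X E M p2 \<gamma> m" unfolding is_image_def using fact \<gamma>(3) by auto
  have pdg: "cp X p2 (d V \<gamma>) \<in> hom X (dm X (d V \<gamma>)) (R x)" using dV\<gamma> p2 by blast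
  obtain kk e1' n1' where F1: "e1' \<in> E" "n1' \<in> M" "e1' \<in> hom X (dm X (d V \<gamma>)) kk" "n1' \<in> hom X kk (R x)"
      "cp X p2 (d V \<gamma>) = cp X n1' e1'"
    using X.factor[OF pdg] by blast
  have i1: "is_image X E M p2 (d V \<gamma>) n1'" unfolding is_image_def using F1 by (auto simp: hom_def)
  have se: "sub_eq X n1' (d (R x) m)" using cpt2 \<gamma>S i1 i2 unfolding preserving_def dp2 by blast
  have "cp X n1' e1' = cp X p2 (cp X \<gamma> h)" using F1(5) h(2) by simp
  also have "\<dots> = cp X (\<rho> x) h" using X.assoc[OF h(1) \<gamma>(1) p2] \<gamma>(3) by simp
  also have "\<dots> = cp X m (cp X e h)" using X.assoc[OF h(1) eh mh] fact(4) by simp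
  finally have eq: "cp X n1' e1' = cp X m (cp X e h)" .
  obtain t1 where t1: "t1 \<in> hom X kk Y" "n1' = cp X m t1"
    using X.img_le[OF F1(1-4) fact(2) mh X.comp_hom[OF h(1) eh] eq] by blast
  have dRm: "d (R x) m \<in> hom X (dm X (d (R x) m)) (R x)" using d_hom[OF Rx(2) mh] by auto
  have le5: "sub_le X (d (R x) m) m"
    using sub_le_trans[of "d (R x) m" n1' m] se t1 F1(4) mh unfolding sub_eq_def by (auto simp: sub_le_def hom_def)
  have RRx: "R (R x) \<in> P" using R_ob(2)[OF Rx(2)] .
  obtain \<sigma> where \<sigma>: "\<sigma> \<in> hom X (R (R x)) (R x)" "cp X (\<rho> (R x)) \<sigma> = idm X (R (R x))"
    using iso_inv[OF rho_iso[OF Rx(1)] rho_hom[OF Rx(2)]] by metis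
  have Re: "Rm e \<in> hom X (R x) (R Y)" using Rmor_spec(1)[OF eh] .
  have Rmh: "Rm m \<in> hom X (R Y) (R (R x))" using Rmor_spec(1)[OF mh] .
  have "cp X (Rm m) (cp X (Rm e) \<sigma>) = cp X (cp X (Rm m) (Rm e)) \<sigma>" using X.assoc[OF \<sigma>(1) Re Rmh] .
  also have "\<dots> = cp X (Rm (\<rho> x)) \<sigma>" using Rmor_comp[OF eh mh] fact(4) by simp
  also have "\<dots> = idm X (R (R x))" using Rmor_rho[OF xo] \<sigma>(2) by simp
  finally have "cp X (Rm m) (cp X (Rm e) \<sigma>) = idm X (R (R x))" .
  then have iso: "iso X (d (R x) m)" using d_iso[OF Rx(2) mh X.comp_hom[OF \<sigma>(1) Re]] by blast
  obtain j where j: "j \<in> hom X (dm X (d (R x) m)) Y" "d (R x) m = cp X m j"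
    using X.sub_leE[OF le5 dRm mh] .
  obtain ji where ji: "ji \<in> hom X (R x) (dm X (d (R x) m))" "cp X (d (R x) m) ji = idm X (R x)"
    using iso_inv[OF iso dRm] by metis
  have "cp X m (cp X j ji) = idm X (R x)" using X.assoc[OF ji(1) j(1) mh] j(2) ji(2) by simp
  then have "iso X m" using X.mono_split_epi_iso[OF X.M_mono[OF fact(2)] mh X.comp_hom[OF ji(1) j(1)]] by blast
  then have "m \<in> E" by (rule X.iso_E)
  then show ?thesis using X.E_comp[OF fact(1) _ eh mh] fact(4) by simp
qed

end

context setting
begin

lemma compact_A:
  assumes cpt: "compact X E M d a" and aP: "a \<in> P"
  shows "compact A F N c a"
  unfolding compact_def
proof (intro conjI ballI allI impI)
  have ao: "a \<in> ob X" using aP subA by auto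
  show "a \<in> ob A" using ao aP by simp
  fix Z p1 p2 assume ZA: "Z \<in> ob A" and pA: "is_product A a Z p1 p2"
  have ZP: "Z \<in> P" and Zo: "Z \<in> ob X" using ZA by auto
  note PA = A.productD[OF pA]
  define W where "W = dm X p1"
  have WP: "W \<in> P" using PA unfolding W_def by (auto simp: hom_def)
  have Wo: "W \<in> ob X" using WP subA by auto
  have pX: "is_product X a Z p1 p2" using prodA_X[OF aP ZP pA] .
  have p2: "p2 \<in> hom X W Z" using PA unfolding W_def by (auto simp: homA)
  have dp2: "dm X p2 = W" "cd X p2 = Z" using p2 by (auto simp: hom_def)
  have cpt2: "preserving X E M d p2" using cpt Zo pX unfolding compact_def by blast
  show "preserving A F N c p2"
    unfolding preserving_def fullsub_simps dp2
  proof (intro ballI allI impI)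
    fix n n1 n2 assume n: "n \<in> sub A N W" and i1: "is_image A F N p2 (c W n) n1"
      and i2: "is_image A F N p2 n n2"
    have nN: "n \<in> N" and cdn: "cd X n = W" using n by (auto simp: sub_def)
    have nh: "n \<in> hom X (dm X n) W" and dnP: "dm X n \<in> P" using nN cdn A.M_ar by (auto simp: hom_def)
    obtain f1 where e1: "n1 \<in> N" "f1 \<in> F" "cd X f1 = dm X n1" "cp X p2 (c W n) = cp X n1 f1"
      using i1 unfolding is_image_def by auto
    obtain f2 where e2: "n2 \<in> N" "f2 \<in> F" "cd X f2 = dm X n2" "cp X p2 n = cp X n2 f2"
      using i2 unfolding is_image_def by auto
    have cW: "c W n \<in> N" "c W n \<in> hom X (dm X (c W n)) W" "dm X (c W n) \<in> P" using c_N[OF WP nN cdn] by auto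
    have pc: "cp X p2 (c W n) \<in> hom X (dm X (c W n)) Z" using cW p2 by blast
    have f1h: "f1 \<in> hom X (dm X (c W n)) (dm X n1)" and n1h: "n1 \<in> hom X (dm X n1) Z"
    proof -
      have ar: "f1 \<in> ar X" "n1 \<in> ar X" using e1 A.E_ar A.M_ar by auto
      have "f1 \<in> hom X (dm X f1) (dm X n1)" "n1 \<in> hom X (dm X n1) (cd X n1)" using ar e1(3) by (auto simp: hom_def)
      then have "cp X n1 f1 \<in> hom X (dm X f1) (cd X n1)" by blast
      then show "f1 \<in> hom X (dm X (c W n)) (dm X n1)" "n1 \<in> hom X (dm X n1) Z"
        using pc e1 A.E_ar A.M_ar by (auto simp: hom_def)
    qed
    have pn: "cp X p2 n \<in> hom X (dm X n) Z" using nh p2 by blast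
    have f2h: "f2 \<in> hom X (dm X n) (dm X n2)" and n2h: "n2 \<in> hom X (dm X n2) Z"
    proof -
      have ar: "f2 \<in> ar X" "n2 \<in> ar X" using e2 A.E_ar A.M_ar by auto
      have "f2 \<in> hom X (dm X f2) (dm X n2)" "n2 \<in> hom X (dm X n2) (cd X n2)" using ar e2(3) by (auto simp: hom_def)
      then have "cp X n2 f2 \<in> hom X (dm X f2) (cd X n2)" by blast
      then show "f2 \<in> hom X (dm X n) (dm X n2)" "n2 \<in> hom X (dm X n2) Z"
        using pn e2 A.E_ar A.M_ar by (auto simp: hom_def)
    qed
    have dn1P: "dm X n1 \<in> P" "dm X n2 \<in> P" using e1(1) e2(1) A.M_ar by auto
    have cdn2: "cd X n2 = Z" using n2h by (simp add: hom_def)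
    have cZ: "c Z n2 \<in> N" "c Z n2 \<in> hom X (dm X (c Z n2)) Z" "dm X (c Z n2) \<in> P" using c_N[OF ZP e2(1) cdn2] by auto
    have G1: "sub_le X n1 (c Z n2)"
      by (rule c_cont[OF WP nN cdn p2 ZP e1(1) e1(2) e1(3) e1(4) e2(1) e2(2) e2(3) e2(4)])
    obtain k1 e1' m1 where M1: "e1' \<in> E" "m1 \<in> M" "e1' \<in> hom X (dm X (d W n)) k1" "m1 \<in> hom X k1 Z"
        "cp X p2 (d W n) = cp X m1 e1'"
      using X.factor[OF X.comp_hom[OF d_hom(2)[OF Wo nh] p2]] by blast
    obtain k2 e2' m2 where M2: "e2' \<in> E" "m2 \<in> M" "e2' \<in> hom X (dm X n) k2" "m2 \<in> hom X k2 Z"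
        "cp X p2 n = cp X m2 e2'"
      using X.factor[OF pn] by blast
    have nS: "n \<in> sub X M W" using nN cdn NM by (auto simp: sub_def)
    have ii1: "is_image X E M p2 (d W n) m1" unfolding is_image_def using M1 by (auto simp: hom_def)
    have ii2: "is_image X E M p2 n m2" unfolding is_image_def using M2 by (auto simp: hom_def)
    have se: "sub_eq X m1 (d Z m2)"
      using cpt2 nS ii1 ii2 unfolding preserving_def dp2 by blast
    have dWn: "d W n \<in> hom X (dm X (d W n)) W" using d_hom[OF Wo nh] by auto
    obtain j where j: "j \<in> hom X (dm X (d W n)) (dm X (c W n))" "d W n = cp X (c W n) j"
      using X.sub_leE[OF d_le_c[OF WP nN cdn] dWn cW(2)] .
    have "cp X m1 e1' = cp X p2 (cp X (c W n) j)" using M1(5) j(2) by simp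
    also have "\<dots> = cp X (cp X n1 f1) j" using X.assoc[OF j(1) cW(2) p2] e1(4) by simp
    also have "\<dots> = cp X n1 (cp X f1 j)" using X.assoc[OF j(1) f1h n1h] by simp
    finally have eq1: "cp X m1 e1' = cp X n1 (cp X f1 j)" .
    obtain t1 where t1: "t1 \<in> hom X k1 (dm X n1)" "m1 = cp X n1 t1"
      using X.img_le[OF M1(1-4) _ n1h X.comp_hom[OF j(1) f1h] eq1] e1(1) NM by blast
    have L1: "sub_le X m1 n1" using t1 M1(4) n1h by (auto simp: sub_le_def hom_def)
    have L2: "sub_le X (d Z m2) m1" using se unfolding sub_eq_def by blast
    obtain n3 fn3 q3 where s3: "n3 \<in> N" "fn3 \<in> F" "fn3 \<in> hom X (R k2) (dm X n3)" "n3 \<in> hom X (dm X n3) (R Z)"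
      "dm X n3 \<in> P" "Rm m2 = cp X n3 fn3" "is_pullback X (\<rho> Z) (c (R Z) n3) (d Z m2) q3"
      using d_spec[OF Zo M2(4)] by blast
    have k2o: "k2 \<in> ob X" using X.hom_ob(1)[OF M2(4)] .
    have RZ: "R Z \<in> P" using R_ob(2)[OF Zo] .
    have rZ: "\<rho> Z \<in> hom X Z (R Z)" and rk: "\<rho> k2 \<in> hom X k2 (R k2)" using rho_hom Zo k2o by auto
    have Rm2: "Rm m2 \<in> hom X (R k2) (R Z)" "cp X (Rm m2) (\<rho> k2) = cp X (\<rho> Z) m2" using Rmor_spec[OF M2(4)] by auto
    have u: "cp X fn3 (cp X (\<rho> k2) e2') \<in> hom X (dm X n) (dm X n3)" using s3(3) rk M2(3) by blast
    have "cp X (cp X (\<rho> Z) n2) f2 = cp X (\<rho> Z) (cp X p2 n)" using X.assoc[OF f2h n2h rZ] e2(4) by simp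
    also have "\<dots> = cp X (cp X (\<rho> Z) m2) e2'" using X.assoc[OF M2(3) M2(4) rZ] M2(5) by simp
    also have "\<dots> = cp X (Rm m2) (cp X (\<rho> k2) e2')" using X.assoc[OF M2(3) rk Rm2(1)] Rm2(2) by simp
    also have "\<dots> = cp X n3 (cp X fn3 (cp X (\<rho> k2) e2'))"
      using X.assoc[OF X.comp_hom[OF M2(3) rk] s3(3) s3(4)] s3(6) by simp
    finally have eq2: "cp X (cp X (\<rho> Z) n2) f2 = cp X n3 (cp X fn3 (cp X (\<rho> k2) e2'))" .
    have f2A: "f2 \<in> hom A (dm X n) (dm X n2)" using f2h dnP dn1P by (simp add: homA)
    have n3A: "n3 \<in> hom A (dm X n3) (R Z)" using s3 RZ by (simp add: homA)
    have uA: "cp X fn3 (cp X (\<rho> k2) e2') \<in> hom A (dm X n) (dm X n3)" using u dnP s3(5) by (simp add: homA)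
    have vA: "cp X (\<rho> Z) n2 \<in> hom A (dm X n2) (R Z)" using n2h rZ dn1P RZ by (auto simp: homA)
    obtain t3 where t3: "t3 \<in> hom A (dm X n2) (dm X n3)" "cp X n3 t3 = cp X (\<rho> Z) n2"
      using A.diag[OF e2(2) s3(1) f2A n3A uA vA eq2] by metis
    have rZA: "\<rho> Z \<in> hom A Z (R Z)" using rZ ZP RZ by (simp add: homA)
    have cZA: "c Z n2 \<in> hom A (dm X (c Z n2)) Z" using cZ ZP by (simp add: homA)
    have n2A: "n2 \<in> hom A (dm X n2) Z" using n2h dn1P ZP by (simp add: homA)
    obtain k4 f4 n4 where F4: "f4 \<in> F" "n4 \<in> N" "f4 \<in> hom A (dm X (c Z n2)) k4" "n4 \<in> hom A k4 (R Z)"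
        "cp X (\<rho> Z) (c Z n2) = cp X n4 f4"
      using A.factor[OF A.comp_hom[OF cZA rZA]] by blast
    obtain k5 f5 n5 where F5: "f5 \<in> F" "n5 \<in> N" "f5 \<in> hom A (dm X n2) k5" "n5 \<in> hom A k5 (R Z)"
        "cp X (\<rho> Z) n2 = cp X n5 f5"
      using A.factor[OF A.comp_hom[OF n2A rZA]] by blast
    have le4: "sub_le X n4 (c (R Z) n5)"
      by (rule c_cont[OF ZP e2(1) cdn2 rZ RZ F4(2) F4(1) _ F4(5) F5(2) F5(1) _ F5(5)])
         (use F4 F5 in \<open>auto simp: hom_def\<close>)
    obtain t5 where t5: "t5 \<in> hom A k5 (dm X n3)" "n5 = cp X n3 t5"
      using A.img_le[OF F5(1) F5(2) F5(3) F5(4) s3(1) n3A t3(1)] F5(5) t3(2) by metis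
    have le5: "sub_le X n5 n3" using t5 F5(4) n3A by (auto simp: sub_le_def hom_def)
    have cdn5: "cd X n5 = R Z" "cd X n3 = R Z" using F5(4) s3(4) by (auto simp: hom_def)
    have le6: "sub_le X (c (R Z) n5) (c (R Z) n3)" by (rule c_mono[OF RZ F5(2) cdn5(1) s3(1) cdn5(2) le5])
    have c3: "c (R Z) n3 \<in> hom X (dm X (c (R Z) n3)) (R Z)" using c_N[OF RZ s3(1) cdn5(2)] by auto
    have le7: "sub_le X n4 (c (R Z) n3)" using sub_le_trans[OF le4 le6] c3 by (auto simp: hom_def)
    have n4X: "n4 \<in> hom X k4 (R Z)" and f4X: "f4 \<in> hom X (dm X (c Z n2)) k4" using F4 by (auto simp: homA)
    obtain s where s: "s \<in> hom X k4 (dm X (c (R Z) n3))" "n4 = cp X (c (R Z) n3) s"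
      using X.sub_leE[OF le7 n4X c3] .
    have "cp X (\<rho> Z) (c Z n2) = cp X (c (R Z) n3) (cp X s f4)"
      using F4(5) s(2) X.assoc[OF f4X s(1) c3] by simp
    moreover have "c Z n2 \<in> hom X (dm X (c Z n2)) (dm X (\<rho> Z))" using cZ(2) rZ by (simp add: hom_def)
    moreover have "cp X s f4 \<in> hom X (dm X (c Z n2)) (dm X (c (R Z) n3))" using f4X s(1) by blast
    ultimately obtain h where h: "h \<in> hom X (dm X (c Z n2)) (dm X (d Z m2))" "cp X (d Z m2) h = c Z n2"
      using X.pullback_univ[OF s3(7), of "c Z n2" "dm X (c Z n2)" "cp X s f4"] by metis
    have dZm2: "d Z m2 \<in> hom X (dm X (d Z m2)) Z" using d_hom[OF Zo M2(4)] by auto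
    have L3: "sub_le X (c Z n2) (d Z m2)" using h cZ(2) dZm2 by (auto simp: sub_le_def hom_def)
    have G2: "sub_le X (c Z n2) n1"
      using sub_le_trans[OF sub_le_trans[OF L3 L2] L1] n1h M1(4) by (auto simp: hom_def)
    have arA: "n1 \<in> ar A" "c Z n2 \<in> ar A" using e1(1) cZ(1) A.M_ar by auto
    show "sub_eq A n1 (c Z n2)" unfolding sub_eq_def using subA_le[OF arA] subA_le[OF arA(2,1)] G1 G2 by blast
  qed
qed

end

theorem proposition2p6:
  fixes X :: "('o, 'm) cat" and P :: "'o set"
    and E M F N :: "'m set"
    and R :: "'o \<Rightarrow> 'o" and \<rho> :: "'o \<Rightarrow> 'm"
    and c :: "'o \<Rightarrow> 'm \<Rightarrow> 'm"
    and x :: 'o and e m :: 'm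
  assumes catX: "is_cat X"
    and fcX: "finitely_complete X"
    and fcA: "finitely_complete (fullsub X P)"
    and fsX: "proper_fs X E M"
    and fsA: "proper_fs (fullsub X P) F N"
    and subA: "P \<subseteq> ob X"
    and refl: "is_reflection X P R \<rho>"
    and NM: "N \<subseteq> M"
    and RE: "\<forall>f\<in>E. Rmor X R \<rho> f \<in> F"
    and Estable: "stable_under_pullback X E"
    and clos: "closure_operator (fullsub X P) F N c"
    and cpt: "compact X E M (crho X P F N R \<rho> c) x"
    and fact: "e \<in> E" "m \<in> M" "cd X e = dm X m" "\<rho> x = cp X m e"
  shows "compact X E M (crho X P F N R \<rho> c) (cd X e) \<and>
         (separated (fullsub X P) c (R x) \<longrightarrow>
            \<rho> x \<in> E \<and> compact (fullsub X P) F N c (R x))"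
proof -
  interpret S: setting X P E M F N R \<rho> c
    by (rule setting.intro[OF catX fcX fcA fsX fsA subA refl NM RE Estable clos])
  have xo: "x \<in> ob X" using cpt unfolding compact_def by blast
  have rx: "\<rho> x \<in> hom X x (R x)" using S.rho_hom[OF xo] .
  have eh: "e \<in> hom X x (cd X e)"
  proof -
    have ar: "e \<in> ar X" "m \<in> ar X" using fact S.X.E_ar S.X.M_ar by auto
    have "dm X (cp X m e) = dm X e" using S.X.dm_cp[OF ar fact(3)] .
    then show ?thesis using rx fact(4) ar by (auto simp: hom_def)
  qed
  have A: "compact X E M (crho X P F N R \<rho> c) (cd X e)" using S.compact_E[OF cpt fact(1) eh] .
  moreover have "separated (fullsub X P) c (R x) \<longrightarrow> \<rho> x \<in> E \<and> compact (fullsub X P) F N c (R x)"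
  proof
    assume sep: "separated (fullsub X P) c (R x)"
    have rE: "\<rho> x \<in> E" using S.rho_E[OF cpt xo fact sep] .
    have "compact X E M (crho X P F N R \<rho> c) (R x)" using S.compact_E[OF cpt rE rx] .
    then have "compact (fullsub X P) F N c (R x)" using S.compact_A S.R_ob(2)[OF xo] by blast
    then show "\<rho> x \<in> E \<and> compact (fullsub X P) F N c (R x)" using rE by blast
  qed
  ultimately show ?thesis by blast
qed

end
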